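(* Let $M\subset\mathbb{C}^2$ be a real-analytic Levi-nonflat hypersurface which is nonminimal at the origin. (i) If $D$ is a tangential sectorial domain for $M$ at the origin, then for any local holomorphic coordinates $(z,w)$ centered at $0$ in which the complex locus of $M$ is $\{w=0\}$ and $M$ contains the curve $\{z=0,\ \mathrm{Im}\,w=0\}$, the set $D$ contains a set of the form $\Delta\times(S^+\cup\{0\}\cup S^-)$ (in these coordinates), with $\Delta,S^\pm$ as below. (ii) If a $C^\infty$ CR-function $f$ on $M$ defined near the origin is sectorially extendable to some tangential sectorial domain $D$ (standard in some admissible coordinates), then it is also sectorially extendable to a tangential sectorial domain $\tilde D$ which is standard with respect to any other choice of admissible coordinates.
   Context: Nonminimal at $0$: $M$ contains a germ of a nontrivial complex curve $X$ through $0$ (its complex locus). Admissible coordinates: local holomorphic coordinates $(z,w)$ centered at $0$ with $X=\{w=0\}$ and $\{z=0,\ \mathrm{Im}\,w=0\}\subset M$. A tangential sectorial domain for $M$ at $0$ is a set which in some admissible coordinates has the standard form $\Delta\times(S^+\cup\{0\}\cup S^-)$, where $\Delta\subset\mathbb{C}$ is a disc of radius $r>0$ centered at $0$, $S^+=\{|w|<R,\,-\alpha<\arg w<\alpha\}$, $S^-=\{|w|<R,\,\pi-\alpha<\arg w<\pi+\alpha\}$, with $R>0$, $0<\alpha<\pi/2$, $\arg w\in(-\pi/2,3\pi/2]$; write $D^\pm=\Delta\times S^\pm$. A holomorphic $g$ on $D^\pm$ admits the asymptotic representation $\sum_{k,l\ge0}a_{kl}z^kw^l$ if for every $N\ge0$,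 $g-\sum_{k+l\le N}a_{kl}z^kw^l=o(|z|^N+|w|^N)$ as $(z,w)\to0$ in $D^\pm$. A $C^\infty$ CR-function $f$ on $M$ near $0$ is sectorially extendable to $D$ if there exist $f^\pm$ holomorphic on $D^\pm$ with $f^\pm=f$ on $D^\pm\cap M$ and with $f^+$, $f^-$ admitting the same asymptotic representation on $D^+$, $D^-$ respectively. *)

theory Defs
  imports "HOL-Analysis.Analysis" "HOL-Complex_Analysis.Complex_Analysis"
begin

text \<open>Points of C^2 are pairs (z,w) :: complex \<times> complex, regarded as R^4.\<close>

definition cmul2 :: "complex \<Rightarrow> complex \<times> complex \<Rightarrow> complex \<times> complex" where
  "cmul2 c v = (c * fst v, c * snd v)"

definition real_analytic_on :: "(complex \<times> complex) set \<Rightarrow> (complex \<times> complex \<Rightarrow> real) \<Rightarrow> bool" where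
  "real_analytic_on U \<rho> \<longleftrightarrow>
     (\<forall>p\<in>U. \<exists>e>0. \<exists>c :: nat \<times> nat \<times> nat \<times> nat \<Rightarrow> real. \<forall>q\<in>ball p e.
        ((\<lambda>(i,j,k,l). c (i,j,k,l) * Re (fst q - fst p) ^ i * Im (fst q - fst p) ^ j
                         * Re (snd q - snd p) ^ k * Im (snd q - snd p) ^ l) has_sum \<rho> q) UNIV)"

definition defining_fn :: "(complex \<times> complex) set \<Rightarrow> (complex \<times> complex) set \<Rightarrow> (complex \<times> complex \<Rightarrow> real) \<Rightarrow> bool" where
  "defining_fn M U \<rho> \<longleftrightarrow> open U \<and> (0,0) \<in> U \<and> real_analytic_on U \<rho> \<and>
     (\<forall>p\<in>U. frechet_derivative \<rho> (at p) \<noteq> (\<lambda>v. 0)) \<and>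
     M \<inter> U = {p \<in> U. \<rho> p = 0}"

definition real_analytic_hypersurface :: "(complex \<times> complex) set \<Rightarrow> bool" where
  "real_analytic_hypersurface M \<longleftrightarrow> (\<exists>U \<rho>. defining_fn M U \<rho>)"

definition D2 :: "(complex \<times> complex \<Rightarrow> real) \<Rightarrow> complex \<times> complex \<Rightarrow> complex \<times> complex \<Rightarrow> complex \<times> complex \<Rightarrow> real" where
  "D2 \<rho> p u v = frechet_derivative (\<lambda>q. frechet_derivative \<rho> (at q) u) (at p) v"

text \<open>Levi form (times 4) of \<rho> at p on vector v: D2(v,v) + D2(iv,iv) = 4 \<partial>\<partial>bar \<rho>(v, vbar);
  complex tangent space H_p = {v. d\<rho>_p v = 0, d\<rho>_p (iv) = 0}.\<close>
definition levi_nonflat :: "(complex \<times> complex) set \<Rightarrow> bool" where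
  "levi_nonflat M \<longleftrightarrow> (\<exists>U \<rho>. defining_fn M U \<rho> \<and>
     (\<forall>W. open W \<and> (0,0) \<in> W \<longrightarrow>
        (\<exists>p \<in> M \<inter> U \<inter> W. \<exists>v. frechet_derivative \<rho> (at p) v = 0 \<and>
             frechet_derivative \<rho> (at p) (cmul2 \<i> v) = 0 \<and>
             D2 \<rho> p v v + D2 \<rho> p (cmul2 \<i> v) (cmul2 \<i> v) \<noteq> 0)))"

definition holo2 :: "(complex \<times> complex) set \<Rightarrow> (complex \<times> complex \<Rightarrow> complex) \<Rightarrow> bool" where
  "holo2 S g \<longleftrightarrow> (\<forall>p\<in>S. \<exists>L. (g has_derivative L) (at p) \<and> (\<forall>c v. L (cmul2 c v) = c * L v))"

definition complex_locus :: "(complex \<times> complex) set \<Rightarrow> (complex \<times> complex) set" where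
  "complex_locus M = {p \<in> M. \<exists>e>0. \<exists>\<gamma> :: complex \<Rightarrow> complex \<times> complex.
      (fst \<circ> \<gamma>) holomorphic_on ball 0 e \<and> (snd \<circ> \<gamma>) holomorphic_on ball 0 e \<and>
      \<gamma> 0 = p \<and> (\<exists>t\<in>ball 0 e. \<gamma> t \<noteq> p) \<and> \<gamma> ` ball 0 e \<subseteq> M}"

definition nonminimal_at0 :: "(complex \<times> complex) set \<Rightarrow> bool" where
  "nonminimal_at0 M \<longleftrightarrow> (0,0) \<in> complex_locus M"

definition coord_chart :: "(complex \<times> complex) set \<Rightarrow> (complex \<times> complex \<Rightarrow> complex \<times> complex) \<Rightarrow> bool" where
  "coord_chart U \<Phi> \<longleftrightarrow> open U \<and> (0,0) \<in> U \<and> \<Phi> (0,0) = (0,0) \<and>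
     holo2 U (fst \<circ> \<Phi>) \<and> holo2 U (snd \<circ> \<Phi>) \<and> inj_on \<Phi> U \<and> open (\<Phi> ` U) \<and>
     holo2 (\<Phi> ` U) (fst \<circ> inv_into U \<Phi>) \<and> holo2 (\<Phi> ` U) (snd \<circ> inv_into U \<Phi>)"

definition admissible :: "(complex \<times> complex) set \<Rightarrow> (complex \<times> complex) set \<Rightarrow> (complex \<times> complex \<Rightarrow> complex \<times> complex) \<Rightarrow> bool" where
  "admissible M U \<Phi> \<longleftrightarrow> coord_chart U \<Phi> \<and>
     (\<exists>W. open W \<and> (0,0) \<in> W \<and> W \<subseteq> U \<and>
        (\<forall>p\<in>W. p \<in> complex_locus M \<longleftrightarrow> snd (\<Phi> p) = 0) \<and>
        (\<forall>p\<in>W. fst (\<Phi> p) = 0 \<and> Im (snd (\<Phi> p)) = 0 \<longrightarrow> p \<in> M))"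

text \<open>Sectors. With arg w in (-pi/2, 3pi/2]: -\<alpha> < arg w < \<alpha> iff |Arg w| < \<alpha>;
  pi-\<alpha> < arg w < pi+\<alpha> iff |Arg (-w)| < \<alpha> (w \<noteq> 0).\<close>
definition Splus :: "real \<Rightarrow> real \<Rightarrow> complex set" where
  "Splus R \<alpha> = {w. w \<noteq> 0 \<and> norm w < R \<and> \<bar>Arg w\<bar> < \<alpha>}"

definition Sminus :: "real \<Rightarrow> real \<Rightarrow> complex set" where
  "Sminus R \<alpha> = {w. w \<noteq> 0 \<and> norm w < R \<and> \<bar>Arg (- w)\<bar> < \<alpha>}"

definition Dplus :: "real \<Rightarrow> real \<Rightarrow> real \<Rightarrow> (complex \<times> complex) set" where
  "Dplus r R \<alpha> = ball 0 r \<times> Splus R \<alpha>"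

definition Dminus :: "real \<Rightarrow> real \<Rightarrow> real \<Rightarrow> (complex \<times> complex) set" where
  "Dminus r R \<alpha> = ball 0 r \<times> Sminus R \<alpha>"

definition std_sect :: "real \<Rightarrow> real \<Rightarrow> real \<Rightarrow> (complex \<times> complex) set" where
  "std_sect r R \<alpha> = ball 0 r \<times> (Splus R \<alpha> \<union> {0} \<union> Sminus R \<alpha>)"

definition valid_params :: "real \<Rightarrow> real \<Rightarrow> real \<Rightarrow> bool" where
  "valid_params r R \<alpha> \<longleftrightarrow> r > 0 \<and> R > 0 \<and> 0 < \<alpha> \<and> \<alpha> < pi / 2"

definition std_in :: "(complex \<times> complex) set \<Rightarrow> (complex \<times> complex) set \<Rightarrow> (complex \<times> complex \<Rightarrow> complex \<times> complex)
    \<Rightarrow> real \<Rightarrow> real \<Rightarrow> real \<Rightarrow> (complex \<times> complex) set \<Rightarrow> bool" where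
  "std_in M U \<Phi> r R \<alpha> D \<longleftrightarrow> admissible M U \<Phi> \<and> valid_params r R \<alpha> \<and>
     std_sect r R \<alpha> \<subseteq> \<Phi> ` U \<and> D = {p \<in> U. \<Phi> p \<in> std_sect r R \<alpha>}"

definition tangential_sectorial :: "(complex \<times> complex) set \<Rightarrow> (complex \<times> complex) set \<Rightarrow> bool" where
  "tangential_sectorial M D \<longleftrightarrow> (\<exists>U \<Phi> r R \<alpha>. std_in M U \<Phi> r R \<alpha> D)"

definition asymp_rep :: "(complex \<times> complex \<Rightarrow> complex) \<Rightarrow> (nat \<Rightarrow> nat \<Rightarrow> complex) \<Rightarrow> (complex \<times> complex) set \<Rightarrow> bool" where
  "asymp_rep g a S \<longleftrightarrow> (\<forall>N::nat. \<forall>\<epsilon>>0. eventually (\<lambda>q.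
      norm (g q - (\<Sum>k\<le>N. \<Sum>l\<le>N - k. a k l * fst q ^ k * snd q ^ l))
        \<le> \<epsilon> * (norm (fst q) ^ N + norm (snd q) ^ N)) (at (0,0) within S))"

fun Ck_on :: "nat \<Rightarrow> ('a::real_normed_vector \<Rightarrow> 'b::real_normed_vector) \<Rightarrow> 'a set \<Rightarrow> bool" where
  "Ck_on 0 f S = continuous_on S f"
| "Ck_on (Suc k) f S = (\<exists>f'. (\<forall>p\<in>S. (f has_derivative f' p) (at p)) \<and> (\<forall>v. Ck_on k (\<lambda>p. f' p v) S))"

definition smooth_on :: "('a::real_normed_vector \<Rightarrow> 'b::real_normed_vector) \<Rightarrow> 'a set \<Rightarrow> bool" where
  "smooth_on f S \<longleftrightarrow> (\<forall>k. Ck_on k f S)"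

definition CR_smooth :: "(complex \<times> complex) set \<Rightarrow> (complex \<times> complex) set \<Rightarrow> (complex \<times> complex \<Rightarrow> complex) \<Rightarrow> bool" where
  "CR_smooth M V f \<longleftrightarrow> open V \<and> (0,0) \<in> V \<and> (\<exists>U \<rho> F. defining_fn M U \<rho> \<and> V \<subseteq> U \<and>
     smooth_on F V \<and> (\<forall>p \<in> M \<inter> V. F p = f p) \<and>
     (\<forall>p \<in> M \<inter> V. \<forall>v. frechet_derivative \<rho> (at p) v = 0 \<and> frechet_derivative \<rho> (at p) (cmul2 \<i> v) = 0
        \<longrightarrow> frechet_derivative F (at p) (cmul2 \<i> v) = \<i> * frechet_derivative F (at p) v))"

text \<open>f is sectorially extendable to the standard domain with parameters r,R,\<alpha> in the
  coordinates (U,\<Phi>); g+- are the extensions f+- written in these coordinates.\<close>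
definition sect_ext :: "(complex \<times> complex \<Rightarrow> complex) \<Rightarrow> (complex \<times> complex) set \<Rightarrow> (complex \<times> complex) set
    \<Rightarrow> (complex \<times> complex \<Rightarrow> complex \<times> complex) \<Rightarrow> real \<Rightarrow> real \<Rightarrow> real \<Rightarrow> bool" where
  "sect_ext f M U \<Phi> r R \<alpha> \<longleftrightarrow> (\<exists>gp gm a.
     holo2 (Dplus r R \<alpha>) gp \<and> holo2 (Dminus r R \<alpha>) gm \<and>
     (\<forall>p \<in> U \<inter> M. \<Phi> p \<in> Dplus r R \<alpha> \<longrightarrow> gp (\<Phi> p) = f p) \<and>
     (\<forall>p \<in> U \<inter> M. \<Phi> p \<in> Dminus r R \<alpha> \<longrightarrow> gm (\<Phi> p) = f p) \<and>
     asymp_rep gp a (Dplus r R \<alpha>) \<and> asymp_rep gm a (Dminus r R \<alpha>))"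

end

theory Submission
  imports Defs "HOL-Complex_Analysis.Complex_Analysis"
begin

lemma holo2_D:
  assumes "holo2 S g" "p \<in> S"
  obtains L where "(g has_derivative L) (at p)" "\<And>c v. L (cmul2 c v) = c * L v"
  using assms unfolding holo2_def by blast

lemma cl_form:
  assumes "(g has_derivative L) (at p)" "\<And>c v. L (cmul2 c v) = c * L v"
  shows "L v = fst v * L (1,0) + snd v * L (0,1)"
proof -
  have lin: "linear L" using assms(1) has_derivative_linear by blast
  have "v = cmul2 (fst v) (1,0) + cmul2 (snd v) (0,1)" by (simp add: cmul2_def)
  then have "L v = L (cmul2 (fst v) (1,0)) + L (cmul2 (snd v) (0,1))"
    by (metis lin linear_add)
  then show ?thesis using assms(2) by simp
qed

lemma holo2_const: "holo2 S (\<lambda>_. c)"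
  unfolding holo2_def by (auto intro!: exI[of _ "\<lambda>_. 0"] has_derivative_const)

lemma holo2_fst: "holo2 S fst"
  unfolding holo2_def by (auto intro!: exI[of _ fst] has_derivative_fst[OF has_derivative_ident] simp: cmul2_def)

lemma holo2_snd: "holo2 S snd"
  unfolding holo2_def by (auto intro!: exI[of _ snd] has_derivative_snd[OF has_derivative_ident] simp: cmul2_def)

lemma holo2_add: "holo2 S f \<Longrightarrow> holo2 S g \<Longrightarrow> holo2 S (\<lambda>q. f q + g q)"
  unfolding holo2_def
  apply (intro ballI)
  subgoal for p
    apply (elim ballE[where x=p]; simp)
    apply (elim exE conjE)
    subgoal for L1 L2
      by (rule exI[of _ "\<lambda>v. L1 v + L2 v"]) (auto intro!: has_derivative_add simp: distrib_left)
    done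
  done

lemma holo2_mult: "holo2 S f \<Longrightarrow> holo2 S g \<Longrightarrow> holo2 S (\<lambda>q. f q * g q)"
  unfolding holo2_def
proof
  fix p assume f: "\<forall>p\<in>S. \<exists>L. (f has_derivative L) (at p) \<and> (\<forall>c v. L (cmul2 c v) = c * L v)"
    and g: "\<forall>p\<in>S. \<exists>L. (g has_derivative L) (at p) \<and> (\<forall>c v. L (cmul2 c v) = c * L v)"
    and p: "p \<in> S"
  obtain L1 where L1: "(f has_derivative L1) (at p)" "\<And>c v. L1 (cmul2 c v) = c * L1 v" using f p by blast
  obtain L2 where L2: "(g has_derivative L2) (at p)" "\<And>c v. L2 (cmul2 c v) = c * L2 v" using g p by blast
  have "((\<lambda>q. f q * g q) has_derivative (\<lambda>v. f p * L2 v + L1 v * g p)) (at p)"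
    using L1(1) L2(1) by (rule has_derivative_mult)
  moreover have "\<forall>c v. f p * L2 (cmul2 c v) + L1 (cmul2 c v) * g p = c * (f p * L2 v + L1 v * g p)"
    using L1(2) L2(2) by (simp add: algebra_simps)
  ultimately show "\<exists>L. ((\<lambda>q. f q * g q) has_derivative L) (at p) \<and> (\<forall>c v. L (cmul2 c v) = c * L v)"
    by blast
qed

lemma holo2_sum: "finite I \<Longrightarrow> (\<And>i. i \<in> I \<Longrightarrow> holo2 S (f i)) \<Longrightarrow> holo2 S (\<lambda>q. \<Sum>i\<in>I. f i q)"
  by (induction I rule: finite_induct) (auto intro: holo2_add holo2_const)

lemma holo2_power: "holo2 S f \<Longrightarrow> holo2 S (\<lambda>q. f q ^ n)"
  by (induction n) (auto intro: holo2_mult holo2_const)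

lemma holo2_subset: "holo2 S f \<Longrightarrow> T \<subseteq> S \<Longrightarrow> holo2 T f"
  unfolding holo2_def by blast

lemma holo2_compose:
  assumes "holo2 S g" "holo2 T h1" "holo2 T h2" "\<And>q. q \<in> T \<Longrightarrow> (h1 q, h2 q) \<in> S"
  shows "holo2 T (\<lambda>q. g (h1 q, h2 q))"
  unfolding holo2_def
proof
  fix p assume p: "p \<in> T"
  obtain L1 where L1: "(h1 has_derivative L1) (at p)" "\<And>c v. L1 (cmul2 c v) = c * L1 v"
    using holo2_D[OF assms(2) p] by blast
  obtain L2 where L2: "(h2 has_derivative L2) (at p)" "\<And>c v. L2 (cmul2 c v) = c * L2 v"
    using holo2_D[OF assms(3) p] by blast
  obtain Lg where Lg: "(g has_derivative Lg) (at (h1 p, h2 p))" "\<And>c v. Lg (cmul2 c v) = c * Lg v"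
    using holo2_D[OF assms(1) assms(4)[OF p]] by blast
  have hP: "((\<lambda>q. (h1 q, h2 q)) has_derivative (\<lambda>v. (L1 v, L2 v))) (at p)"
    using L1(1) L2(1) by (rule has_derivative_Pair)
  have "((g \<circ> (\<lambda>q. (h1 q, h2 q))) has_derivative (Lg \<circ> (\<lambda>v. (L1 v, L2 v)))) (at p)"
    by (rule diff_chain_at[OF hP]) (use Lg in simp)
  moreover have "(Lg \<circ> (\<lambda>v. (L1 v, L2 v))) (cmul2 c v) = c * (Lg \<circ> (\<lambda>v. (L1 v, L2 v))) v" for c v
  proof -
    have "(L1 (cmul2 c v), L2 (cmul2 c v)) = cmul2 c (L1 v, L2 v)"
      using L1(2) L2(2) by (simp add: cmul2_def)
    then show ?thesis using Lg(2) by simp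
  qed
  ultimately show "\<exists>L. ((\<lambda>q. g (h1 q, h2 q)) has_derivative L) (at p) \<and> (\<forall>c v. L (cmul2 c v) = c * L v)"
    by (auto simp: o_def)
qed

lemma holo2_isCont: "holo2 S f \<Longrightarrow> p \<in> S \<Longrightarrow> isCont f p"
  by (metis holo2_D has_derivative_continuous)

lemma holo2_cont: "holo2 S f \<Longrightarrow> continuous_on S f"
  by (simp add: continuous_at_imp_continuous_on holo2_isCont)

lemma holo2_partial1:
  assumes "holo2 S F" "(z,w) \<in> S"
  shows "\<exists>D. ((\<lambda>z. F (z,w)) has_field_derivative D) (at z)"
proof -
  obtain L where L: "(F has_derivative L) (at (z,w))" "\<And>c v. L (cmul2 c v) = c * L v"
    using holo2_D[OF assms] by blast
  have "((\<lambda>z. (z,w)) has_derivative (\<lambda>h. (h,0))) (at z)"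
    by (auto intro!: derivative_eq_intros)
  then have "((F \<circ> (\<lambda>z. (z,w))) has_derivative (L \<circ> (\<lambda>h. (h,0)))) (at z)"
    by (rule diff_chain_at) (use L in simp)
  moreover have "(L \<circ> (\<lambda>h. (h,0))) = (\<lambda>h. L (1,0) * h)"
  proof
    fix h have "(h, 0::complex) = cmul2 h (1,0)" by (simp add: cmul2_def)
    then show "(L \<circ> (\<lambda>h. (h, 0))) h = L (1, 0) * h" using L(2) by (simp add: mult.commute)
  qed
  ultimately show ?thesis unfolding has_field_derivative_def o_def by auto
qed

lemma holo2_partial2:
  assumes "holo2 S F" "(z,w) \<in> S"
  shows "\<exists>D. ((\<lambda>w. F (z,w)) has_field_derivative D) (at w)"
proof -
  obtain L where L: "(F has_derivative L) (at (z,w))" "\<And>c v. L (cmul2 c v) = c * L v"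
    using holo2_D[OF assms] by blast
  have "((\<lambda>w. (z,w)) has_derivative (\<lambda>h. (0,h))) (at w)"
    by (auto intro!: derivative_eq_intros)
  then have "((F \<circ> (\<lambda>w. (z,w))) has_derivative (L \<circ> (\<lambda>h. (0,h)))) (at w)"
    by (rule diff_chain_at) (use L in simp)
  moreover have "(L \<circ> (\<lambda>h. (0,h))) = (\<lambda>h. L (0,1) * h)"
  proof
    fix h have "(0::complex, h) = cmul2 h (0,1)" by (simp add: cmul2_def)
    then show "(L \<circ> (\<lambda>h. (0, h))) h = L (0, 1) * h" using L(2) by (simp add: mult.commute)
  qed
  ultimately show ?thesis unfolding has_field_derivative_def o_def by auto
qed

lemma holo2_holo1:
  assumes "holo2 S F" "\<And>z. z \<in> A \<Longrightarrow> (z,w) \<in> S"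
  shows "(\<lambda>z. F (z,w)) holomorphic_on A"
  unfolding holomorphic_on_def field_differentiable_def
  using assms holo2_partial1 has_field_derivative_at_within by blast

lemma holo2_holo2:
  assumes "holo2 S F" "\<And>w. w \<in> A \<Longrightarrow> (z,w) \<in> S"
  shows "(\<lambda>w. F (z,w)) holomorphic_on A"
  unfolding holomorphic_on_def field_differentiable_def
  using assms holo2_partial2 has_field_derivative_at_within by blast

definition PP :: "nat \<Rightarrow> (nat \<Rightarrow> nat \<Rightarrow> complex) \<Rightarrow> complex \<times> complex \<Rightarrow> complex" where
  "PP N a q = (\<Sum>k\<le>N. \<Sum>l\<le>N - k. a k l * fst q ^ k * snd q ^ l)"

definition TT :: "nat \<Rightarrow> (nat \<times> nat) set" where
  "TT N = {(k,l). k + l \<le> N}"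

lemma TT_Sigma: "TT N = Sigma {..N} (\<lambda>k. {..N-k})"
  unfolding TT_def by auto

lemma finite_TT [simp]: "finite (TT N)"
  unfolding TT_Sigma by auto

lemma TT_mono: "j \<le> N \<Longrightarrow> TT j \<subseteq> TT N"
  unfolding TT_def by auto

lemma TT_sub: "TT N \<subseteq> {..N} \<times> {..N}"
  unfolding TT_def by auto

lemma PP_TT: "PP N a q = (\<Sum>(k,l)\<in>TT N. a k l * fst q ^ k * snd q ^ l)"
  unfolding PP_def TT_Sigma by (subst sum.Sigma) auto

lemma norm_fst_le: "norm (fst (q::'a::real_normed_vector \<times> 'b::real_normed_vector)) \<le> norm q"
  by (cases q) (simp add: norm_Pair real_le_rsqrt)

lemma norm_snd_le: "norm (snd (q::'a::real_normed_vector \<times> 'b::real_normed_vector)) \<le> norm q"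
  by (cases q) (simp add: norm_Pair real_le_rsqrt)

lemma geo1:
  fixes u :: complex
  assumes "u \<noteq> 1"
  shows "1 / (1 - u) = (\<Sum>k\<le>N. u ^ k) + u ^ Suc N / (1 - u)"
proof -
  have "1 - u ^ Suc N = (1 - u) * (\<Sum>k<Suc N. u ^ k)" by (rule one_diff_power_eq)
  then have "(\<Sum>k\<le>N. u ^ k) = (1 - u ^ Suc N) / (1 - u)"
    using assms by (simp add: lessThan_Suc_atMost)
  then show ?thesis using assms by (simp add: field_simps)
qed

lemma norm_geo_part: "norm (u::complex) \<le> 1 \<Longrightarrow> norm (\<Sum>k\<le>N. u ^ k) \<le> real (Suc N)"
proof -
  assume u: "norm u \<le> 1"
  have "norm (\<Sum>k\<le>N. u ^ k) \<le> (\<Sum>k\<le>N. norm (u ^ k))" by (rule norm_sum)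
  also have "\<dots> \<le> (\<Sum>k\<le>N. 1)"
    by (rule sum_mono) (simp add: norm_power power_le_one u)
  finally show ?thesis by simp
qed

lemma norm_geo_tail:
  fixes u :: complex
  assumes "norm u \<le> s" "s \<le> 1/2"
  shows "norm (u ^ Suc N / (1 - u)) \<le> 2 * s ^ Suc N"
proof -
  have s0: "0 \<le> s" using assms(1) norm_ge_zero order_trans by blast
  have "1 - norm u \<le> norm (1 - u)" by (metis norm_one norm_triangle_ineq2)
  then have d: "1/2 \<le> norm (1 - u)" using assms by linarith
  have "norm (u ^ Suc N / (1 - u)) = norm u ^ Suc N / norm (1 - u)"
    by (simp add: norm_divide norm_power norm_mult)
  also have "\<dots> \<le> s ^ Suc N / (1/2)"
    by (rule frac_le) (use assms s0 d power_mono[OF assms(1) norm_ge_zero, of "Suc N"] in \<open>auto simp del: power_Suc\<close>)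
  finally show ?thesis by simp
qed

lemma geo2:
  fixes u v :: complex
  assumes u: "norm u \<le> s" and v: "norm v \<le> s" and s: "s \<le> 1/2"
  shows "norm (1 / ((1 - u) * (1 - v)) - (\<Sum>(k,l)\<in>TT N. u ^ k * v ^ l))
          \<le> (real (Suc N) ^ 2 + 4 * real (Suc N) + 4) * s ^ Suc N"
proof -
  have s0: "0 \<le> s" using u norm_ge_zero order_trans by blast
  have s1: "s \<le> 1" using s by simp
  have u1: "u \<noteq> 1" using u s by auto
  have v1: "v \<noteq> 1" using v s by auto
  define A where "A = (\<Sum>k\<le>N. u ^ k)"
  define B where "B = (\<Sum>k\<le>N. v ^ k)"
  define a where "a = u ^ Suc N / (1 - u)"
  define b where "b = v ^ Suc N / (1 - v)"
  have eq1: "1 / ((1 - u) * (1 - v)) = (A + a) * (B + b)"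
    using geo1[OF u1, of N] geo1[OF v1, of N] unfolding A_def B_def a_def b_def
    by (metis divide_divide_eq_left' times_divide_times_eq mult_1)
  have AB: "A * B = (\<Sum>(k,l)\<in>{..N}\<times>{..N}. u ^ k * v ^ l)"
    unfolding A_def B_def sum_product sum.cartesian_product by simp
  also have "\<dots> = (\<Sum>(k,l)\<in>TT N. u ^ k * v ^ l) + (\<Sum>(k,l)\<in>{..N}\<times>{..N} - TT N. u ^ k * v ^ l)"
    by (subst sum.subset_diff[OF TT_sub]) auto
  finally have AB': "A * B = (\<Sum>(k,l)\<in>TT N. u ^ k * v ^ l) + (\<Sum>(k,l)\<in>{..N}\<times>{..N} - TT N. u ^ k * v ^ l)" .
  have "norm (\<Sum>(k,l)\<in>{..N}\<times>{..N} - TT N. u ^ k * v ^ l) \<le> (\<Sum>(k,l)\<in>{..N}\<times>{..N} - TT N. s ^ Suc N)"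
  proof (rule order_trans[OF norm_sum sum_mono])
    fix kl assume kl: "kl \<in> {..N}\<times>{..N} - TT N"
    obtain k l where kl': "kl = (k,l)" by force
    have "N < k + l" using kl unfolding kl' TT_def by auto
    have "norm (u ^ k * v ^ l) \<le> s ^ k * s ^ l"
      by (simp add: norm_mult norm_power mult_mono power_mono u v s0)
    also have "\<dots> = s ^ (k + l)" by (simp add: power_add)
    also have "\<dots> \<le> s ^ Suc N" by (rule power_decreasing) (use \<open>N < k + l\<close> s0 s1 in auto)
    finally show "norm (case kl of (k, l) \<Rightarrow> u ^ k * v ^ l) \<le> (case kl of (k, l) \<Rightarrow> s ^ Suc N)"
      by (simp add: kl')
  qed
  also have "\<dots> \<le> real (Suc N) ^ 2 * s ^ Suc N"
  proof -
    have "card ({..N}\<times>{..N} - TT N) \<le> card ({..N}\<times>{..N::nat})" by (rule card_mono) auto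
    then have "real (card ({..N}\<times>{..N} - TT N)) \<le> real (Suc N * Suc N)"
      by (simp only: of_nat_le_iff card_cartesian_product card_atMost)
    then have "real (card ({..N}\<times>{..N} - TT N)) \<le> real (Suc N) ^ 2"
      by (simp only: of_nat_mult power2_eq_square)
    then show ?thesis by (simp add: mult_right_mono s0)
  qed
  finally have e1: "norm (\<Sum>(k,l)\<in>{..N}\<times>{..N} - TT N. u ^ k * v ^ l) \<le> real (Suc N) ^ 2 * s ^ Suc N" .
  have nA: "norm A \<le> real (Suc N)" unfolding A_def using u s1 by (intro norm_geo_part) simp
  have nB: "norm B \<le> real (Suc N)" unfolding B_def using v s1 by (intro norm_geo_part) simp
  have na: "norm a \<le> 2 * s ^ Suc N" unfolding a_def by (rule norm_geo_tail[OF u s])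
  have nb: "norm b \<le> 2 * s ^ Suc N" unfolding b_def by (rule norm_geo_tail[OF v s])
  have sp: "s ^ Suc N \<le> 1" using s0 s1 by (rule power_le_one)
  have "1 / ((1 - u) * (1 - v)) - (\<Sum>(k,l)\<in>TT N. u ^ k * v ^ l)
        = (\<Sum>(k,l)\<in>{..N}\<times>{..N} - TT N. u ^ k * v ^ l) + A * b + a * B + a * b"
    unfolding eq1 using AB' by (simp add: algebra_simps)
  also have "norm \<dots> \<le> real (Suc N) ^ 2 * s ^ Suc N + real (Suc N) * (2 * s ^ Suc N)
                + 2 * s ^ Suc N * real (Suc N) + 2 * s ^ Suc N * (2 * s ^ Suc N)"
  proof -
    have "norm (A * b) \<le> real (Suc N) * (2 * s ^ Suc N)"
      unfolding norm_mult by (rule mult_mono) (use nA nb in auto)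
    moreover have "norm (a * B) \<le> 2 * s ^ Suc N * real (Suc N)"
      unfolding norm_mult by (rule mult_mono) (use na nB s0 in auto)
    moreover have "norm (a * b) \<le> 2 * s ^ Suc N * (2 * s ^ Suc N)"
      unfolding norm_mult by (rule mult_mono) (use na nb s0 in auto)
    ultimately show ?thesis using e1 norm_triangle_ineq[of "_ + _ + _" "a*b"]
      norm_triangle_ineq[of "_ + _" "a*B"] norm_triangle_ineq[of "_" "A*b"]
      by (smt (verit, best))
  qed
  also have "\<dots> \<le> (real (Suc N) ^ 2 + 4 * real (Suc N) + 4) * s ^ Suc N"
  proof -
    have "s ^ Suc N * s ^ Suc N \<le> s ^ Suc N * 1"
      by (rule mult_left_mono[OF sp]) (use s0 in simp)
    then have "2 * s ^ Suc N * (2 * s ^ Suc N) \<le> 4 * s ^ Suc N"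
      by (simp del: power_Suc)
    then show ?thesis by (simp add: algebra_simps)
  qed
  finally show ?thesis .
qed

definition I2 :: "real \<Rightarrow> (complex \<times> complex \<Rightarrow> complex) \<Rightarrow> complex" where
  "I2 r \<phi> = contour_integral (circlepath 0 r) (\<lambda>\<zeta>. contour_integral (circlepath 0 r) (\<lambda>\<eta>. \<phi> (\<zeta>,\<eta>)))"

lemma inner_integrable:
  fixes \<phi> :: "complex \<times> complex \<Rightarrow> complex"
  assumes "0 < r" "continuous_on (sphere 0 r \<times> sphere 0 r) \<phi>" "\<zeta> \<in> sphere 0 r"
  shows "(\<lambda>\<eta>. \<phi> (\<zeta>,\<eta>)) contour_integrable_on circlepath 0 r"
proof (rule contour_integrable_continuous_circlepath)
  show "continuous_on (path_image (circlepath 0 r)) (\<lambda>\<eta>. \<phi> (\<zeta>, \<eta>))"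
    using assms by (auto intro!: continuous_on_compose2[OF assms(2)] continuous_intros)
qed

lemma P_cont:
  fixes \<phi> :: "complex \<times> complex \<Rightarrow> complex"
  assumes r: "0 < r" and cont: "continuous_on (sphere 0 r \<times> sphere 0 r) \<phi>"
  shows "continuous_on (sphere 0 r) (\<lambda>\<zeta>. contour_integral (circlepath 0 r) (\<lambda>\<eta>. \<phi> (\<zeta>,\<eta>)))"
  unfolding continuous_on_iff
proof (intro ballI allI impI)
  fix \<zeta>0 e assume z0: "\<zeta>0 \<in> sphere (0::complex) r" and e: "(0::real) < e"
  have "uniformly_continuous_on (sphere 0 r \<times> sphere 0 r) \<phi>"
    by (intro compact_uniformly_continuous cont compact_Times compact_sphere)
  then obtain d where d: "d > 0" and dd: "\<And>x x'. x \<in> sphere 0 r \<times> sphere 0 r \<Longrightarrow> x' \<in> sphere 0 r \<times> sphere 0 r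
      \<Longrightarrow> dist x' x < d \<Longrightarrow> dist (\<phi> x') (\<phi> x) < e / (2 * pi * r + 1)"
    unfolding uniformly_continuous_on_def
    by (metis divide_pos_pos e add_pos_pos less_numeral_extra(1) mult_pos_pos pi_gt_zero r zero_less_numeral)
  show "\<exists>d>0. \<forall>x'\<in>sphere 0 r. dist x' \<zeta>0 < d \<longrightarrow>
          dist (contour_integral (circlepath 0 r) (\<lambda>\<eta>. \<phi> (x', \<eta>))) (contour_integral (circlepath 0 r) (\<lambda>\<eta>. \<phi> (\<zeta>0, \<eta>))) < e"
  proof (intro exI[of _ d] conjI ballI impI d)
    fix \<zeta> assume z: "\<zeta> \<in> sphere 0 r" and dz: "dist \<zeta> \<zeta>0 < d"
    have i1: "(\<lambda>\<eta>. \<phi> (\<zeta>,\<eta>)) contour_integrable_on circlepath 0 r" by (rule inner_integrable[OF r cont z])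
    have i2: "(\<lambda>\<eta>. \<phi> (\<zeta>0,\<eta>)) contour_integrable_on circlepath 0 r" by (rule inner_integrable[OF r cont z0])
    have "contour_integral (circlepath 0 r) (\<lambda>\<eta>. \<phi> (\<zeta>, \<eta>)) - contour_integral (circlepath 0 r) (\<lambda>\<eta>. \<phi> (\<zeta>0, \<eta>))
          = contour_integral (circlepath 0 r) (\<lambda>\<eta>. \<phi> (\<zeta>, \<eta>) - \<phi> (\<zeta>0, \<eta>))"
      by (rule contour_integral_diff[OF i1 i2, symmetric])
    also have "norm \<dots> \<le> e / (2 * pi * r + 1) * (2 * pi * r)"
    proof (rule has_contour_integral_bound_circlepath)
      show "((\<lambda>\<eta>. \<phi> (\<zeta>, \<eta>) - \<phi> (\<zeta>0, \<eta>)) has_contour_integral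
             contour_integral (circlepath 0 r) (\<lambda>\<eta>. \<phi> (\<zeta>, \<eta>) - \<phi> (\<zeta>0, \<eta>))) (circlepath 0 r)"
        by (rule has_contour_integral_integral) (use i1 i2 in \<open>rule contour_integrable_diff\<close>)
      have "0 < 2 * pi * r" using r by simp
      then have "0 < 2 * pi * r + 1" by linarith
      then show "0 \<le> e / (2 * pi * r + 1)" using e by simp
      fix \<eta> :: complex assume "norm (\<eta> - 0) = r"
      then have eta: "\<eta> \<in> sphere 0 r" by simp
      have "dist (\<zeta>, \<eta>) (\<zeta>0, \<eta>) < d" using dz by (simp add: dist_Pair_Pair)
      then have "dist (\<phi> (\<zeta>, \<eta>)) (\<phi> (\<zeta>0, \<eta>)) < e / (2 * pi * r + 1)"
        using dd[of "(\<zeta>0,\<eta>)" "(\<zeta>,\<eta>)"] z z0 eta by auto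
      then show "norm (\<phi> (\<zeta>, \<eta>) - \<phi> (\<zeta>0, \<eta>)) \<le> e / (2 * pi * r + 1)" by (simp add: dist_norm)
    qed (use r in auto)
    also have "\<dots> < e"
    proof -
      have p0: "0 < 2 * pi * r" using r by simp
      then have "(2 * pi * r) / (2 * pi * r + 1) < 1" by (simp add: divide_less_eq)
      then have "e * ((2 * pi * r) / (2 * pi * r + 1)) < e * 1" using e by (intro mult_strict_left_mono) auto
      then show ?thesis by simp
    qed
    finally show "dist (contour_integral (circlepath 0 r) (\<lambda>\<eta>. \<phi> (\<zeta>, \<eta>))) (contour_integral (circlepath 0 r) (\<lambda>\<eta>. \<phi> (\<zeta>0, \<eta>))) < e"
      by (simp add: dist_norm)
  qed
qed

lemma outer_integrable:
  assumes "0 < r" "continuous_on (sphere 0 r \<times> sphere 0 r) \<phi>"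
  shows "(\<lambda>\<zeta>. contour_integral (circlepath 0 r) (\<lambda>\<eta>. \<phi> (\<zeta>,\<eta>))) contour_integrable_on circlepath 0 r"
  by (rule contour_integrable_continuous_circlepath) (use P_cont[OF assms] assms(1) in simp)

lemma I2_sum:
  assumes r: "0 < r" and fin: "finite I" and cont: "\<And>i. i \<in> I \<Longrightarrow> continuous_on (sphere 0 r \<times> sphere 0 r) (\<phi> i)"
  shows "I2 r (\<lambda>p. \<Sum>i\<in>I. \<phi> i p) = (\<Sum>i\<in>I. I2 r (\<phi> i))"
proof -
  have "I2 r (\<lambda>p. \<Sum>i\<in>I. \<phi> i p) = contour_integral (circlepath 0 r)
          (\<lambda>\<zeta>. \<Sum>i\<in>I. contour_integral (circlepath 0 r) (\<lambda>\<eta>. \<phi> i (\<zeta>,\<eta>)))"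
    unfolding I2_def
  proof (rule contour_integral_eq)
    fix \<zeta> assume "\<zeta> \<in> path_image (circlepath 0 r)"
    then have z: "\<zeta> \<in> sphere 0 r" using r by simp
    show "contour_integral (circlepath 0 r) (\<lambda>\<eta>. \<Sum>i\<in>I. \<phi> i (\<zeta>, \<eta>)) =
          (\<Sum>i\<in>I. contour_integral (circlepath 0 r) (\<lambda>\<eta>. \<phi> i (\<zeta>, \<eta>)))"
      by (rule contour_integral_sum[OF fin]) (use inner_integrable[OF r cont z] in auto)
  qed
  also have "\<dots> = (\<Sum>i\<in>I. I2 r (\<phi> i))"
    unfolding I2_def
    by (rule contour_integral_sum[OF fin]) (use outer_integrable[OF r cont] in auto)
  finally show ?thesis .
qed

lemma I2_add:
  assumes r: "0 < r" and c1: "continuous_on (sphere 0 r \<times> sphere 0 r) \<phi>"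
    and c2: "continuous_on (sphere 0 r \<times> sphere 0 r) \<psi>"
  shows "I2 r (\<lambda>p. \<phi> p + \<psi> p) = I2 r \<phi> + I2 r \<psi>"
  using I2_sum[OF r, of "{True,False}" "\<lambda>b. if b then \<phi> else \<psi>"] c1 c2 by simp

lemma I2_cmult:
  assumes r: "0 < r" and c1: "continuous_on (sphere 0 r \<times> sphere 0 r) \<phi>"
  shows "I2 r (\<lambda>p. c * \<phi> p) = c * I2 r \<phi>"
proof -
  have "I2 r (\<lambda>p. c * \<phi> p) = contour_integral (circlepath 0 r)
          (\<lambda>\<zeta>. c * contour_integral (circlepath 0 r) (\<lambda>\<eta>. \<phi> (\<zeta>,\<eta>)))"
    unfolding I2_def
  proof (rule contour_integral_eq)
    fix \<zeta> assume "\<zeta> \<in> path_image (circlepath 0 r)"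
    then have z: "\<zeta> \<in> sphere 0 r" using r by simp
    show "contour_integral (circlepath 0 r) (\<lambda>\<eta>. c * \<phi> (\<zeta>, \<eta>)) =
          c * contour_integral (circlepath 0 r) (\<lambda>\<eta>. \<phi> (\<zeta>, \<eta>))"
      by (rule contour_integral_lmul) (use inner_integrable[OF r c1 z] in auto)
  qed
  also have "\<dots> = c * I2 r \<phi>"
    unfolding I2_def by (rule contour_integral_lmul) (use outer_integrable[OF r c1] in auto)
  finally show ?thesis .
qed

lemma I2_bound:
  assumes r: "0 < r" and c1: "continuous_on (sphere 0 r \<times> sphere 0 r) \<phi>"
    and B: "0 \<le> B" "\<And>p. p \<in> sphere 0 r \<times> sphere 0 r \<Longrightarrow> norm (\<phi> p) \<le> B"
  shows "norm (I2 r \<phi>) \<le> B * (2 * pi * r) * (2 * pi * r)"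
  unfolding I2_def
proof (rule has_contour_integral_bound_circlepath)
  show "((\<lambda>\<zeta>. contour_integral (circlepath 0 r) (\<lambda>\<eta>. \<phi> (\<zeta>, \<eta>))) has_contour_integral
     contour_integral (circlepath 0 r) (\<lambda>\<zeta>. contour_integral (circlepath 0 r) (\<lambda>\<eta>. \<phi> (\<zeta>, \<eta>)))) (circlepath 0 r)"
    by (rule has_contour_integral_integral) (rule outer_integrable[OF r c1])
  show "0 \<le> B * (2 * pi * r)" using B r by simp
  fix \<zeta> :: complex assume "norm (\<zeta> - 0) = r"
  then have z: "\<zeta> \<in> sphere 0 r" by simp
  show "norm (contour_integral (circlepath 0 r) (\<lambda>\<eta>. \<phi> (\<zeta>, \<eta>))) \<le> B * (2 * pi * r)"
  proof (rule has_contour_integral_bound_circlepath)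
    show "((\<lambda>\<eta>. \<phi> (\<zeta>, \<eta>)) has_contour_integral contour_integral (circlepath 0 r) (\<lambda>\<eta>. \<phi> (\<zeta>, \<eta>))) (circlepath 0 r)"
      by (rule has_contour_integral_integral) (rule inner_integrable[OF r c1 z])
    fix \<eta> :: complex assume "norm (\<eta> - 0) = r"
    then show "norm (\<phi> (\<zeta>, \<eta>)) \<le> B" using z B(2) by simp
  qed (use r B in auto)
qed (use r in auto)

lemma I2_cauchy:
  assumes F: "holo2 S F" and r: "0 < r" and sub: "cball 0 r \<times> cball 0 r \<subseteq> S"
    and z: "norm z < r" and w: "norm w < r"
  shows "I2 r (\<lambda>p. F p / ((fst p - z) * (snd p - w))) = (2 * of_real pi * \<i>) * (2 * of_real pi * \<i>) * F (z,w)"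
proof -
  have contS: "continuous_on S F" by (rule holo2_cont[OF F])
  have inner: "contour_integral (circlepath 0 r) (\<lambda>\<eta>. F (\<zeta>,\<eta>) / ((\<zeta> - z) * (\<eta> - w)))
        = (2 * of_real pi * \<i>) * (F (\<zeta>, w) / (\<zeta> - z))" if zeta: "\<zeta> \<in> sphere 0 r" for \<zeta>
  proof -
    have c: "continuous_on (cball 0 r) (\<lambda>\<eta>. F (\<zeta>,\<eta>))"
      by (rule continuous_on_compose2[OF contS]) (use sub zeta in \<open>auto intro!: continuous_intros\<close>)
    have h: "(\<lambda>\<eta>. F (\<zeta>,\<eta>)) holomorphic_on ball 0 r"
      by (rule holo2_holo2[OF F]) (use sub zeta in auto)
    have ci: "((\<lambda>\<eta>. F (\<zeta>,\<eta>) / (\<eta> - w)) has_contour_integral (2 * of_real pi * \<i> * F (\<zeta>,w))) (circlepath 0 r)"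
      using Cauchy_integral_circlepath[OF c h, of w] w by simp
    then have "((\<lambda>\<eta>. F (\<zeta>,\<eta>) / (\<eta> - w) * (1 / (\<zeta> - z))) has_contour_integral
            (2 * of_real pi * \<i> * F (\<zeta>,w) * (1 / (\<zeta> - z)))) (circlepath 0 r)"
      by (rule has_contour_integral_rmul)
    then have "((\<lambda>\<eta>. F (\<zeta>,\<eta>) / ((\<zeta> - z) * (\<eta> - w))) has_contour_integral
            (2 * of_real pi * \<i> * F (\<zeta>,w) * (1 / (\<zeta> - z)))) (circlepath 0 r)"
      by (simp add: divide_inverse inverse_mult_distrib mult_ac)
    then show ?thesis by (simp add: contour_integral_unique)
  qed
  have c2: "continuous_on (cball 0 r) (\<lambda>\<zeta>. F (\<zeta>,w))"
    by (rule continuous_on_compose2[OF contS]) (use sub w in \<open>auto intro!: continuous_intros\<close>)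
  have h2: "(\<lambda>\<zeta>. F (\<zeta>,w)) holomorphic_on ball 0 r"
    by (rule holo2_holo1[OF F]) (use sub w in auto)
  have ci2: "((\<lambda>\<zeta>. F (\<zeta>,w) / (\<zeta> - z)) has_contour_integral (2 * of_real pi * \<i> * F (z,w))) (circlepath 0 r)"
    using Cauchy_integral_circlepath[OF c2 h2, of z] z by simp
  have "I2 r (\<lambda>p. F p / ((fst p - z) * (snd p - w))) =
        contour_integral (circlepath 0 r) (\<lambda>\<zeta>. (2 * of_real pi * \<i>) * (F (\<zeta>, w) / (\<zeta> - z)))"
    unfolding I2_def by (rule contour_integral_eq) (use inner r in auto)
  also have "\<dots> = (2 * of_real pi * \<i>) * (2 * of_real pi * \<i> * F (z,w))"
    by (rule contour_integral_unique, rule has_contour_integral_lmul[OF ci2])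
  finally show ?thesis by simp
qed

lemma rem_bound:
  fixes z w \<zeta> \<eta> :: complex
  assumes r: "0 < r" and zeta: "norm \<zeta> = r" and eta: "norm \<eta> = r"
    and z: "norm z \<le> t" and w: "norm w \<le> t" and t: "t \<le> r / 2"
  shows "norm (1 / ((\<zeta> - z) * (\<eta> - w)) - (\<Sum>(k,l)\<in>TT N. z ^ k * w ^ l / (\<zeta> ^ Suc k * \<eta> ^ Suc l)))
          \<le> (real (Suc N) ^ 2 + 4 * real (Suc N) + 4) * (t / r) ^ Suc N / r ^ 2"
proof -
  have z0: "\<zeta> \<noteq> 0" "\<eta> \<noteq> 0" using zeta eta r by auto
  define u where "u = z / \<zeta>"
  define v where "v = w / \<eta>"
  have nu: "norm u \<le> t / r" unfolding u_def using zeta z r by (simp add: norm_divide divide_right_mono)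
  have nv: "norm v \<le> t / r" unfolding v_def using eta w r by (simp add: norm_divide divide_right_mono)
  have tr: "t / r \<le> 1/2" using t r by (simp add: divide_le_eq)
  have e1: "1 / ((\<zeta> - z) * (\<eta> - w)) = 1 / (\<zeta> * \<eta>) * (1 / ((1 - u) * (1 - v)))"
    unfolding u_def v_def using z0 by (simp add: field_simps)
  have e2: "z ^ k * w ^ l / (\<zeta> ^ Suc k * \<eta> ^ Suc l) = 1 / (\<zeta> * \<eta>) * (u ^ k * v ^ l)" for k l
    unfolding u_def v_def using z0 by (simp add: field_simps power_divide)
  have "1 / ((\<zeta> - z) * (\<eta> - w)) - (\<Sum>(k,l)\<in>TT N. z ^ k * w ^ l / (\<zeta> ^ Suc k * \<eta> ^ Suc l))
        = 1 / (\<zeta> * \<eta>) * (1 / ((1 - u) * (1 - v)) - (\<Sum>(k,l)\<in>TT N. u ^ k * v ^ l))"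
    unfolding e1 e2 by (simp add: sum_distrib_left case_prod_unfold right_diff_distrib)
  also have "norm \<dots> \<le> 1 / r ^ 2 * ((real (Suc N) ^ 2 + 4 * real (Suc N) + 4) * (t / r) ^ Suc N)"
    unfolding norm_mult
  proof (rule mult_mono)
    show "norm (1 / (\<zeta> * \<eta>)) \<le> 1 / r ^ 2" using zeta eta by (simp add: norm_divide norm_mult power2_eq_square)
    show "norm (1 / ((1 - u) * (1 - v)) - (\<Sum>(k, l)\<in>TT N. u ^ k * v ^ l))
      \<le> (real (Suc N) ^ 2 + 4 * real (Suc N) + 4) * (t / r) ^ Suc N"
      by (rule geo2[OF nu nv tr])
  qed (use r in auto)
  finally show ?thesis by (simp add: mult.commute)
qed

lemma taylor2:
  fixes F :: "complex \<times> complex \<Rightarrow> complex"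
  assumes F: "holo2 S F" and r: "0 < r" and sub: "cball 0 r \<times> cball 0 r \<subseteq> S"
  shows "\<exists>b. \<forall>N. \<exists>C. \<forall>q. norm q \<le> r / 2 \<longrightarrow> norm (F q - PP N b q) \<le> C * norm q ^ Suc N"
proof -
  let ?T = "sphere (0::complex) r \<times> sphere (0::complex) r"
  have TS: "?T \<subseteq> S" using sub by auto
  have contT: "continuous_on ?T F" by (rule continuous_on_subset[OF holo2_cont[OF F] TS])
  have "compact (F ` ?T)" by (rule compact_continuous_image[OF contT]) (intro compact_Times compact_sphere)
  then obtain M where M: "M > 0" "\<And>p. p \<in> ?T \<Longrightarrow> norm (F p) \<le> M"
    using compact_imp_bounded bounded_pos by (metis image_eqI)
  define c0 :: complex where "c0 = (2 * of_real pi * \<i>) * (2 * of_real pi * \<i>)"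
  have c0: "c0 \<noteq> 0" "norm c0 = (2 * pi) * (2 * pi)" unfolding c0_def by (auto simp: norm_mult)
  define b where "b k l = I2 r (\<lambda>p. F p / (fst p ^ Suc k * snd p ^ Suc l)) / c0" for k l
  have nz: "fst p \<noteq> 0" "snd p \<noteq> 0" if "p \<in> ?T" for p using that r by auto
  have nzp: "fst p ^ Suc k * snd p ^ Suc l \<noteq> 0" if "p \<in> ?T" for p k l
    using nz[OF that] by simp
  have cont_kl: "continuous_on ?T (\<lambda>p. F p / (fst p ^ Suc k * snd p ^ Suc l))" for k l
    by (intro continuous_intros contT) (use nzp in blast)
  have cont_kl': "continuous_on ?T (\<lambda>p. c / (fst p ^ Suc k * snd p ^ Suc l))" for c k l
    by (intro continuous_intros) (use nzp in blast)
  show ?thesis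
  proof (intro exI[of _ b] allI)
    fix N
    define CN where "CN = (real (Suc N) ^ 2 + 4 * real (Suc N) + 4)"
    show "\<exists>C. \<forall>q. norm q \<le> r / 2 \<longrightarrow> norm (F q - PP N b q) \<le> C * norm q ^ Suc N"
    proof (intro exI[of _ "M * CN / r ^ Suc N"] allI impI)
      fix q :: "complex \<times> complex" assume q: "norm q \<le> r / 2"
      obtain z w where qzw: "q = (z,w)" by force
      have nz': "norm z \<le> norm q" "norm w \<le> norm q" using norm_fst_le[of q] norm_snd_le[of q] qzw by auto
      have zr: "norm z < r" "norm w < r" using nz' q r by auto
      define Rem where "Rem p = 1 / ((fst p - z) * (snd p - w)) -
          (\<Sum>(k,l)\<in>TT N. z ^ k * w ^ l / (fst p ^ Suc k * snd p ^ Suc l))" for p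
      have dnz: "fst p - z \<noteq> 0" "snd p - w \<noteq> 0" if "p \<in> ?T" for p
        using that zr by auto
      have dnz': "(fst p - z) * (snd p - w) \<noteq> 0" if "p \<in> ?T" for p
        using dnz[OF that] by simp
      have contRem: "continuous_on ?T (\<lambda>p. F p * Rem p)"
        unfolding Rem_def case_prod_unfold
        by (intro continuous_intros contT continuous_on_sum cont_kl' ballI) (use dnz' in blast)
      have eq: "(\<lambda>p. F p / ((fst p - z) * (snd p - w))) =
          (\<lambda>p. (\<Sum>kl\<in>TT N. z ^ fst kl * w ^ snd kl * (F p / (fst p ^ Suc (fst kl) * snd p ^ Suc (snd kl))))
               + F p * Rem p)"
        unfolding Rem_def
        by (auto simp: fun_eq_iff case_prod_unfold sum_distrib_left right_diff_distrib divide_inverse mult_ac)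
      have "c0 * F (z,w) = I2 r (\<lambda>p. F p / ((fst p - z) * (snd p - w)))"
        using I2_cauchy[OF F r sub zr] unfolding c0_def by simp
      also have "\<dots> = I2 r (\<lambda>p. \<Sum>kl\<in>TT N. z ^ fst kl * w ^ snd kl * (F p / (fst p ^ Suc (fst kl) * snd p ^ Suc (snd kl))))
                     + I2 r (\<lambda>p. F p * Rem p)"
        unfolding eq
        by (rule I2_add[OF r _ contRem]) (intro continuous_on_sum continuous_intros cont_kl)
      also have "I2 r (\<lambda>p. \<Sum>kl\<in>TT N. z ^ fst kl * w ^ snd kl * (F p / (fst p ^ Suc (fst kl) * snd p ^ Suc (snd kl))))
           = (\<Sum>kl\<in>TT N. z ^ fst kl * w ^ snd kl * I2 r (\<lambda>p. F p / (fst p ^ Suc (fst kl) * snd p ^ Suc (snd kl))))"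
      proof (subst I2_sum[OF r])
        show "finite (TT N)" by simp
        fix kl show "continuous_on ?T (\<lambda>p. z ^ fst kl * w ^ snd kl * (F p / (fst p ^ Suc (fst kl) * snd p ^ Suc (snd kl))))"
          by (intro continuous_intros cont_kl)
      next
        show "(\<Sum>kl\<in>TT N. I2 r (\<lambda>p. z ^ fst kl * w ^ snd kl * (F p / (fst p ^ Suc (fst kl) * snd p ^ Suc (snd kl)))))
           = (\<Sum>kl\<in>TT N. z ^ fst kl * w ^ snd kl * I2 r (\<lambda>p. F p / (fst p ^ Suc (fst kl) * snd p ^ Suc (snd kl))))"
          by (rule sum.cong[OF refl], rule I2_cmult[OF r cont_kl])
      qed
      also have "\<dots> = c0 * PP N b q"
        unfolding PP_TT b_def qzw using c0
        by (simp add: sum_distrib_left case_prod_unfold mult_ac)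
      finally have main: "c0 * (F q - PP N b q) = I2 r (\<lambda>p. F p * Rem p)"
        unfolding qzw by (simp add: algebra_simps)
      have bnd: "norm (F p * Rem p) \<le> M * (CN * (norm q / r) ^ Suc N / r ^ 2)" if "p \<in> ?T" for p
        unfolding norm_mult
      proof (rule mult_mono)
        show "norm (F p) \<le> M" using M that by auto
        show "norm (Rem p) \<le> CN * (norm q / r) ^ Suc N / r ^ 2"
          unfolding Rem_def CN_def
          by (rule rem_bound[OF r _ _ nz'(1) nz'(2) q]) (use that in auto)
      qed (use M in auto)
      have CN0: "0 \<le> CN" unfolding CN_def by simp
      have B0: "0 \<le> M * (CN * (norm q / r) ^ Suc N / r ^ 2)" using M CN0 r by simp
      have "norm (I2 r (\<lambda>p. F p * Rem p)) \<le> M * (CN * (norm q / r) ^ Suc N / r ^ 2) * (2 * pi * r) * (2 * pi * r)"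
        by (rule I2_bound[OF r contRem B0 bnd])
      then have "norm c0 * norm (F q - PP N b q) \<le> M * (CN * (norm q / r) ^ Suc N / r ^ 2) * (2 * pi * r) * (2 * pi * r)"
        using main by (metis norm_mult)
      also have "\<dots> = (2*pi)*(2*pi) * (M * CN / r ^ Suc N * norm q ^ Suc N)"
        using r by (simp add: power_divide field_simps power2_eq_square)
      finally have "(2*pi)*(2*pi) * norm (F q - PP N b q) \<le> (2*pi)*(2*pi) * (M * CN / r ^ Suc N * norm q ^ Suc N)"
        unfolding c0 .
      then show "norm (F q - PP N b q) \<le> M * CN / r ^ Suc N * norm q ^ Suc N"
        by (rule mult_left_le_imp_le) simp
    qed
  qed
qed

lemma poly_small_zero:
  fixes d :: "nat \<Rightarrow> complex"
  assumes "0 < \<delta>" "\<And>s. 0 < norm s \<Longrightarrow> norm s < \<delta> \<Longrightarrow> norm (\<Sum>k\<le>n. d k * s ^ k) \<le> C * norm s ^ Suc n"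
  shows "k \<le> n \<Longrightarrow> d k = 0"
  using assms
proof (induction n arbitrary: d C k)
  case 0
  have lim1: "((\<lambda>s. \<Sum>k\<le>(0::nat). d k * s ^ k) \<longlongrightarrow> d 0) (at 0)" by simp
  have "\<forall>\<^sub>F s in at (0::complex). norm (\<Sum>k\<le>(0::nat). d k * s ^ k) \<le> C * norm s ^ Suc 0"
    using 0 unfolding eventually_at by (intro exI[of _ \<delta>]) (auto simp: dist_norm)
  moreover have "((\<lambda>s::complex. C * norm s ^ Suc 0) \<longlongrightarrow> 0) (at 0)"
    by (auto intro!: tendsto_eq_intros)
  ultimately have lim2: "((\<lambda>s. \<Sum>k\<le>(0::nat). d k * s ^ k) \<longlongrightarrow> 0) (at 0)"
    by (rule Lim_null_comparison)
  have "d 0 = 0" using tendsto_unique[OF _ lim1 lim2] by simp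
  then show ?case using 0 by simp
next
  case (Suc n)
  define f where "f s = (\<Sum>k\<le>Suc n. d k * s ^ k)" for s
  have lim1: "(f \<longlongrightarrow> d 0) (at 0)"
  proof -
    have "isCont f 0" unfolding f_def by (intro continuous_intros)
    moreover have "f 0 = d 0" unfolding f_def by (simp add: zero_power)
    ultimately show ?thesis by (metis isCont_def)
  qed
  have "\<forall>\<^sub>F s in at (0::complex). norm (f s) \<le> C * norm s ^ Suc (Suc n)"
    using Suc.prems unfolding eventually_at f_def by (intro exI[of _ \<delta>]) (auto simp: dist_norm)
  moreover have "((\<lambda>s::complex. C * norm s ^ Suc (Suc n)) \<longlongrightarrow> 0) (at 0)"
    by (auto intro!: tendsto_eq_intros)
  ultimately have lim2: "(f \<longlongrightarrow> 0) (at 0)"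
    by (rule Lim_null_comparison)
  have d0: "d 0 = 0" using tendsto_unique[OF _ lim1 lim2] by simp
  have fs: "f s = s * (\<Sum>k\<le>n. d (Suc k) * s ^ k)" for s
    unfolding f_def by (subst sum.atMost_Suc_shift) (simp add: d0 sum_distrib_left mult_ac)
  have IH: "d (Suc k') = 0" if "k' \<le> n" for k'
  proof (rule Suc.IH[of k' "\<lambda>k. d (Suc k)" C, OF that Suc.prems(2)])
    fix s :: complex assume s: "0 < norm s" "norm s < \<delta>"
    have "norm s * norm (\<Sum>k\<le>n. d (Suc k) * s ^ k) \<le> norm s * (C * norm s ^ Suc n)"
      using Suc.prems(3)[OF s] unfolding f_def[symmetric] fs by (simp add: norm_mult mult_ac)
    then show "norm (\<Sum>k\<le>n. d (Suc k) * s ^ k) \<le> C * norm s ^ Suc n"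
      using s(1) by (rule mult_left_le_imp_le)
  qed
  show ?case
  proof (cases k)
    case 0 then show ?thesis using d0 by simp
  next
    case (Suc k') then show ?thesis using IH Suc.prems(1) by simp
  qed
qed

lemma PP_line:
  "PP j d (s * z0, s) = (\<Sum>n\<le>j. (\<Sum>k\<le>n. d k (n - k) * z0 ^ k) * s ^ n)"
proof -
  have "PP j d (s * z0, s) = (\<Sum>(k,l)\<in>TT j. d k l * (s * z0) ^ k * s ^ l)"
    by (simp add: PP_TT)
  also have "\<dots> = (\<Sum>n\<le>j. \<Sum>k\<le>n. d k (n - k) * (s * z0) ^ k * s ^ (n - k))"
    unfolding TT_def by (rule sum.triangle_reindex_eq)
  also have "\<dots> = (\<Sum>n\<le>j. (\<Sum>k\<le>n. d k (n - k) * z0 ^ k) * s ^ n)"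
  proof (rule sum.cong[OF refl])
    fix n assume "n \<in> {..j}"
    have "d k (n - k) * (s * z0) ^ k * s ^ (n - k) = d k (n - k) * z0 ^ k * s ^ n" if "k \<le> n" for k
    proof -
      have "s ^ k * s ^ (n - k) = s ^ n" using that by (simp add: power_add[symmetric])
      then show ?thesis by (simp add: power_mult_distrib mult_ac)
    qed
    then have "(\<Sum>k\<le>n. d k (n - k) * (s * z0) ^ k * s ^ (n - k)) = (\<Sum>k\<le>n. d k (n - k) * z0 ^ k * s ^ n)"
      by (intro sum.cong) auto
    then show "(\<Sum>k\<le>n. d k (n - k) * (s * z0) ^ k * s ^ (n - k)) = (\<Sum>k\<le>n. d k (n - k) * z0 ^ k) * s ^ n"
      by (simp add: sum_distrib_right)
  qed
  finally show ?thesis .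
qed

lemma PP_small_zero:
  assumes "0 < \<delta>" "\<And>q. 0 < norm q \<Longrightarrow> norm q < \<delta> \<Longrightarrow> norm (PP j d q) \<le> C * norm q ^ Suc j"
    and "k + l \<le> j"
  shows "d k l = 0"
proof -
  have e0: "(\<Sum>k\<le>n. d k (n - k) * z0 ^ k) = 0" if n: "n \<le> j" for z0 n
  proof -
    define \<kappa> where "\<kappa> = norm (z0, 1::complex)"
    have k1: "\<kappa> \<ge> 1" unfolding \<kappa>_def norm_Pair by (simp add: real_le_rsqrt)
    have nq: "norm (s * z0, s) = norm s * \<kappa>" for s
    proof -
      have "(cmod s)\<^sup>2 * (cmod z0)\<^sup>2 + (cmod s)\<^sup>2 = (cmod s)\<^sup>2 * ((cmod z0)\<^sup>2 + 1)" by algebra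
      then show ?thesis unfolding \<kappa>_def norm_Pair
        by (simp add: norm_mult power_mult_distrib real_sqrt_mult)
    qed
    show ?thesis
    proof (rule poly_small_zero[where n=j and \<delta>="\<delta>/\<kappa>" and C="C*\<kappa>^Suc j", OF _ _ n])
      show "0 < \<delta> / \<kappa>" using assms(1) k1 by simp
      fix s :: complex assume s: "0 < norm s" "norm s < \<delta> / \<kappa>"
      have "0 < norm (s * z0, s)" "norm (s * z0, s) < \<delta>"
        using s k1 unfolding nq by (auto simp: pos_less_divide_eq)
      from assms(2)[OF this] show "norm (\<Sum>k\<le>j. (\<Sum>i\<le>k. d i (k - i) * z0 ^ i) * s ^ k) \<le> C * \<kappa> ^ Suc j * norm s ^ Suc j"
        unfolding PP_line nq by (simp add: power_mult_distrib mult_ac)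
    qed
  qed
  have "d i (k + l - i) = 0" if "i \<le> k + l" for i
  proof (rule poly_small_zero[where n="k+l" and \<delta>=1 and C=0 and d="\<lambda>i. d i (k + l - i)", OF _ _ that])
    fix s :: complex
    show "norm (\<Sum>i\<le>k+l. d i (k + l - i) * s ^ i) \<le> 0 * norm s ^ Suc (k + l)"
      using e0[OF assms(3), of s] by simp
  qed simp
  from this[of k] show ?thesis by simp
qed

lemma lin_bound:
  fixes f :: "'a::real_normed_vector \<Rightarrow> 'b::real_normed_vector"
  assumes "(f has_derivative L) (at 0)" "f 0 = 0"
  shows "\<exists>K \<delta>. K > 0 \<and> \<delta> > 0 \<and> (\<forall>q. norm q < \<delta> \<longrightarrow> norm (f q) \<le> K * norm q)"
proof -
  have bl: "bounded_linear L" and al: "\<forall>e>0. \<exists>d>0. \<forall>y. norm (y - 0) < d \<longrightarrow> norm (f y - f 0 - L (y - 0)) \<le> e * norm (y - 0)"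
    using assms(1) unfolding has_derivative_at_alt by auto
  obtain B where B: "B > 0" "\<And>x. norm (L x) \<le> norm x * B" using bounded_linear.pos_bounded[OF bl] by blast
  obtain d where d: "d > 0" "\<And>y. norm y < d \<Longrightarrow> norm (f y - L y) \<le> 1 * norm y"
    using al[rule_format, of 1] assms(2) by auto
  have "norm (f q) \<le> (B + 1) * norm q" if q: "norm q < d" for q
  proof -
    have "norm (f q) \<le> norm (f q - L q) + norm (L q)" by (metis norm_triangle_ineq diff_add_cancel)
    also have "\<dots> \<le> norm q + norm q * B" using d(2)[OF q] B(2)[of q] by simp
    finally show ?thesis by (simp add: algebra_simps)
  qed
  then show ?thesis using B d by (intro exI[of _ "B + 1"] exI[of _ d]) auto
qed

lemma PP_tail:
  assumes "j \<le> N" "0 \<le> K"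
  shows "\<exists>C. \<forall>X t. 0 \<le> t \<and> t \<le> 1 \<and> norm (fst X) \<le> K * t \<and> norm (snd X) \<le> K * t \<longrightarrow>
            norm (PP N c X - PP j c X) \<le> C * t ^ Suc j"
proof (intro exI[of _ "\<Sum>(k,l)\<in>TT N - TT j. norm (c k l) * K ^ (k + l)"] allI impI)
  fix X :: "complex \<times> complex" and t :: real
  assume h: "0 \<le> t \<and> t \<le> 1 \<and> norm (fst X) \<le> K * t \<and> norm (snd X) \<le> K * t"
  have "PP N c X - PP j c X = (\<Sum>(k,l)\<in>TT N - TT j. c k l * fst X ^ k * snd X ^ l)"
    unfolding PP_TT by (subst sum.subset_diff[OF TT_mono[OF assms(1)]]) auto
  also have "norm \<dots> \<le> (\<Sum>(k,l)\<in>TT N - TT j. norm (c k l) * K ^ (k + l) * t ^ Suc j)"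
  proof (rule order_trans[OF norm_sum sum_mono])
    fix kl assume kl: "kl \<in> TT N - TT j"
    obtain k l where kl': "kl = (k,l)" by force
    have jl: "Suc j \<le> k + l" using kl unfolding kl' TT_def by auto
    have "norm (c k l * fst X ^ k * snd X ^ l) = norm (c k l) * norm (fst X) ^ k * norm (snd X) ^ l"
      by (simp add: norm_mult norm_power)
    also have "\<dots> \<le> norm (c k l) * (K * t) ^ k * (K * t) ^ l"
      using h assms(2) by (intro mult_mono power_mono mult_nonneg_nonneg zero_le_power) auto
    also have "\<dots> = norm (c k l) * K ^ (k + l) * t ^ (k + l)"
      by (simp add: power_add power_mult_distrib mult_ac)
    also have "\<dots> \<le> norm (c k l) * K ^ (k + l) * t ^ Suc j"
      by (intro mult_left_mono power_decreasing jl) (use h assms(2) in auto)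
    finally show "norm (case kl of (k, l) \<Rightarrow> c k l * fst X ^ k * snd X ^ l)
         \<le> (case kl of (k, l) \<Rightarrow> norm (c k l) * K ^ (k + l) * t ^ Suc j)" by (simp add: kl')
  qed
  also have "\<dots> = (\<Sum>(k,l)\<in>TT N - TT j. norm (c k l) * K ^ (k + l)) * t ^ Suc j"
    by (simp add: sum_distrib_right case_prod_unfold)
  finally show "norm (PP N c X - PP j c X) \<le> (\<Sum>(k,l)\<in>TT N - TT j. norm (c k l) * K ^ (k + l)) * t ^ Suc j" .
qed

lemma PP_diff: "PP j (\<lambda>k l. b k l - c k l) q = PP j b q - PP j c q"
  unfolding PP_def by (simp add: sum_subtractf left_diff_distrib)

lemma holo2_PP:
  assumes "holo2 S h1" "holo2 S h2"
  shows "holo2 S (\<lambda>q. PP N a (h1 q, h2 q))"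
  unfolding PP_def fst_conv snd_conv
  by (intro holo2_sum holo2_mult holo2_power holo2_const assms finite_atMost)

lemma expand_compose:
  assumes h1: "holo2 S h1" and h2: "holo2 S h2" and r: "0 < r" and sub: "cball 0 r \<times> cball 0 r \<subseteq> S"
    and z1: "h1 (0,0) = 0" and z2: "h2 (0,0) = 0"
  shows "\<exists>a'. \<forall>N. \<exists>C \<delta>. \<delta> > 0 \<and> (\<forall>q. norm q < \<delta> \<longrightarrow> norm (PP N a (h1 q, h2 q) - PP N a' q) \<le> C * norm q ^ Suc N)"
proof -
  have 0: "(0,0) \<in> S" using sub r by auto
  obtain L1 where "(h1 has_derivative L1) (at (0,0))" using holo2_D[OF h1 0] by blast
  then obtain K1 d1 where K1: "K1 > 0" "d1 > 0" "\<And>q. norm q < d1 \<Longrightarrow> norm (h1 q) \<le> K1 * norm q"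
    using lin_bound[of h1 L1] z1 by (auto simp: zero_prod_def)
  obtain L2 where "(h2 has_derivative L2) (at (0,0))" using holo2_D[OF h2 0] by blast
  then obtain K2 d2 where K2: "K2 > 0" "d2 > 0" "\<And>q. norm q < d2 \<Longrightarrow> norm (h2 q) \<le> K2 * norm q"
    using lin_bound[of h2 L2] z2 by (auto simp: zero_prod_def)
  define K where "K = max K1 K2"
  define dd where "dd = min (min d1 d2) (min (r/2) 1)"
  have dd: "dd > 0" using K1 K2 r unfolding dd_def by auto
  have Hb: "norm (h1 q) \<le> K * norm q" "norm (h2 q) \<le> K * norm q" if "norm q < dd" for q
  proof -
    have "K1 * norm q \<le> K * norm q" "K2 * norm q \<le> K * norm q"
      unfolding K_def by (auto intro: mult_right_mono)
    then show "norm (h1 q) \<le> K * norm q" "norm (h2 q) \<le> K * norm q"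
      using K1(3)[of q] K2(3)[of q] that unfolding dd_def by auto
  qed
  have K0: "0 \<le> K" using K1 unfolding K_def by auto
  define F where "F N q = PP N a (h1 q, h2 q)" for N q
  have "\<forall>N. \<exists>b. \<forall>M. \<exists>C. \<forall>q. norm q \<le> r / 2 \<longrightarrow> norm (F N q - PP M b q) \<le> C * norm q ^ Suc M"
    unfolding F_def using taylor2[OF holo2_PP[OF h1 h2] r sub] by blast
  then obtain B where B: "\<And>N M. \<exists>C. \<forall>q. norm q \<le> r / 2 \<longrightarrow> norm (F N q - PP M (B N) q) \<le> C * norm q ^ Suc M"
    by metis
  define a' where "a' k l = B (k + l) k l" for k l
  have coef: "B N k l = a' k l" if "k + l \<le> N" for N k l
  proof -
    define j where "j = k + l"
    have jN: "j \<le> N" using that j_def by simp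
    obtain C1 where C1: "\<And>X t. 0 \<le> t \<and> t \<le> 1 \<and> norm (fst X) \<le> 1 * t \<and> norm (snd X) \<le> 1 * t \<Longrightarrow>
            norm (PP N (B N) X - PP j (B N) X) \<le> C1 * t ^ Suc j"
      using PP_tail[OF jN, of 1 "B N"] by (metis zero_le_one)
    obtain C3 where C3: "\<And>X t. 0 \<le> t \<and> t \<le> 1 \<and> norm (fst X) \<le> K * t \<and> norm (snd X) \<le> K * t \<Longrightarrow>
            norm (PP N a X - PP j a X) \<le> C3 * t ^ Suc j"
      using PP_tail[OF jN K0, of a] by metis
    obtain C2 where C2: "\<And>q. norm q \<le> r / 2 \<Longrightarrow> norm (F N q - PP N (B N) q) \<le> C2 * norm q ^ Suc N"
      using B by blast
    obtain C4 where C4: "\<And>q. norm q \<le> r / 2 \<Longrightarrow> norm (F j q - PP j (B j) q) \<le> C4 * norm q ^ Suc j"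
      using B by blast
    have "(\<lambda>k l. B N k l - B j k l) k l = 0"
    proof (rule PP_small_zero[OF dd _ order.refl[of "k+l"], unfolded j_def[symmetric]])
      fix q :: "complex \<times> complex" assume q: "0 < norm q" "norm q < dd"
      have q1: "norm q \<le> 1" "norm q \<le> r/2" using q unfolding dd_def by auto
      have pw: "norm q ^ Suc N \<le> norm q ^ Suc j" using q1 jN by (intro power_decreasing) auto
      have e: "PP j (\<lambda>k l. B N k l - B j k l) q =
           - (PP N (B N) q - PP j (B N) q) - (F N q - PP N (B N) q) + (F N q - F j q) + (F j q - PP j (B j) q)"
        unfolding PP_diff by simp
      have t1: "norm (PP N (B N) q - PP j (B N) q) \<le> C1 * norm q ^ Suc j"
        using C1[of "norm q" q] q1 norm_fst_le[of q] norm_snd_le[of q] by auto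
      have t2: "norm (F N q - PP N (B N) q) \<le> \<bar>C2\<bar> * norm q ^ Suc j"
      proof -
        have "C2 * norm q ^ Suc N \<le> \<bar>C2\<bar> * norm q ^ Suc N" by (intro mult_right_mono) auto
        also have "\<dots> \<le> \<bar>C2\<bar> * norm q ^ Suc j" by (intro mult_left_mono pw) auto
        finally show ?thesis using C2[OF q1(2)] by linarith
      qed
      have t3: "norm (F N q - F j q) \<le> C3 * norm q ^ Suc j"
        unfolding F_def using C3[of "norm q" "(h1 q, h2 q)"] q1 Hb[OF q(2)] by auto
      have t4: "norm (F j q - PP j (B j) q) \<le> C4 * norm q ^ Suc j" using C4[OF q1(2)] .
      have "norm (PP j (\<lambda>k l. B N k l - B j k l) q) \<le> norm (PP N (B N) q - PP j (B N) q) + norm (F N q - PP N (B N) q)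
              + norm (F N q - F j q) + norm (F j q - PP j (B j) q)"
        unfolding e by (smt (verit) norm_minus_cancel norm_triangle_ineq norm_triangle_ineq4)
      also have "\<dots> \<le> (C1 + \<bar>C2\<bar> + C3 + C4) * norm q ^ Suc j"
        using t1 t2 t3 t4 by (simp add: algebra_simps)
      finally show "norm (PP j (\<lambda>k l. B N k l - B j k l) q) \<le> (C1 + \<bar>C2\<bar> + C3 + C4) * norm q ^ Suc j" .
    qed
    then show ?thesis unfolding a'_def j_def by simp
  qed
  show ?thesis
  proof (intro exI[of _ a'] allI)
    fix N
    obtain C2 where C2: "\<And>q. norm q \<le> r / 2 \<Longrightarrow> norm (F N q - PP N (B N) q) \<le> C2 * norm q ^ Suc N"
      using B by blast
    have "PP N (B N) q = PP N a' q" for q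
      unfolding PP_def by (intro sum.cong refl) (auto simp: coef)
    then show "\<exists>C \<delta>. \<delta> > 0 \<and> (\<forall>q. norm q < \<delta> \<longrightarrow> norm (PP N a (h1 q, h2 q) - PP N a' q) \<le> C * norm q ^ Suc N)"
      using C2 r unfolding F_def by (intro exI[of _ C2] exI[of _ "r/2"]) auto
  qed
qed

lemma norm_pow_split:
  fixes q :: "complex \<times> complex"
  shows "norm q ^ N \<le> 2 ^ N * (norm (fst q) ^ N + norm (snd q) ^ N)"
proof -
  define m where "m = max (norm (fst q)) (norm (snd q))"
  have "norm q \<le> norm (fst q) + norm (snd q)" by (metis norm_Pair_le prod.collapse)
  also have "\<dots> \<le> 2 * m" unfolding m_def by auto
  finally have "norm q ^ N \<le> (2 * m) ^ N" by (intro power_mono) auto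
  also have "\<dots> = 2 ^ N * m ^ N" by (simp add: power_mult_distrib)
  also have "m ^ N \<le> norm (fst q) ^ N + norm (snd q) ^ N"
    unfolding m_def by (cases "norm (fst q) \<le> norm (snd q)") (auto simp: max_def)
  finally show ?thesis by simp
qed

lemma asymp_compose:
  assumes A: "asymp_rep g a S"
    and S0: "(0,0) \<notin> S"
    and d0: "d0 > 0" and map: "\<And>q. q \<in> S' \<Longrightarrow> norm q < d0 \<Longrightarrow> H q \<in> S"
    and K: "K > 0" and Hb: "\<And>q. norm q < d0 \<Longrightarrow> norm (H q) \<le> K * norm q"
    and E: "\<And>N. \<exists>C \<delta>. \<delta> > 0 \<and> (\<forall>q. norm q < \<delta> \<longrightarrow> norm (PP N a (H q) - PP N a' q) \<le> C * norm q ^ Suc N)"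
  shows "asymp_rep (\<lambda>q. g (H q)) a' S'"
  unfolding asymp_rep_def
proof (intro allI impI)
  fix N :: nat and \<epsilon> :: real assume e: "\<epsilon> > 0"
  obtain C \<delta> where C: "\<delta> > 0" "\<And>q. norm q < \<delta> \<Longrightarrow> norm (PP N a (H q) - PP N a' q) \<le> C * norm q ^ Suc N"
    using E[of N] by blast
  define e1 where "e1 = \<epsilon> / (4 * K ^ N * 2 ^ N)"
  have e1: "e1 > 0" unfolding e1_def using e K by simp
  have "eventually (\<lambda>q. norm (g q - (\<Sum>k\<le>N. \<Sum>l\<le>N - k. a k l * fst q ^ k * snd q ^ l))
        \<le> e1 * (norm (fst q) ^ N + norm (snd q) ^ N)) (at (0,0) within S)"
    using A e1 unfolding asymp_rep_def by blast
  then obtain d1 where d1: "d1 > 0" "\<And>y. y \<in> S \<Longrightarrow> y \<noteq> (0,0) \<Longrightarrow> dist y (0,0) < d1 \<Longrightarrow>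
       norm (g y - PP N a y) \<le> e1 * (norm (fst y) ^ N + norm (snd y) ^ N)"
    unfolding eventually_at PP_def by blast
  define d where "d = min (min d0 \<delta>) (min (d1 / K) (\<epsilon> / (2 * 2 ^ N * (\<bar>C\<bar> + 1))))"
  have d: "d > 0" unfolding d_def using d0 C(1) d1(1) K e by auto
  show "\<forall>\<^sub>F q in at (0, 0) within S'. norm (g (H q) - (\<Sum>k\<le>N. \<Sum>l\<le>N - k. a' k l * fst q ^ k * snd q ^ l))
        \<le> \<epsilon> * (norm (fst q) ^ N + norm (snd q) ^ N)"
    unfolding eventually_at PP_def[symmetric]
  proof (intro exI[of _ d] conjI d ballI impI)
    fix q assume q: "q \<in> S'" "q \<noteq> (0,0) \<and> dist q (0,0) < d"
    have nq: "norm q < d" using q by (metis diff_zero dist_norm zero_prod_def)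
    have nq0: "norm q < d0" "norm q < \<delta>" "K * norm q < d1"
      using nq K unfolding d_def by (auto simp: pos_less_divide_eq mult.commute)
    have nq4: "norm q \<le> \<epsilon> / (2 * 2 ^ N * (\<bar>C\<bar> + 1))"
      using nq unfolding d_def by linarith
    have HS: "H q \<in> S" using map[OF q(1) nq0(1)] .
    have H0: "H q \<noteq> (0,0)" using HS S0 by auto
    have nH: "norm (H q) \<le> K * norm q" using Hb[OF nq0(1)] .
    have dH: "dist (H q) (0,0) < d1" using nH nq0(3) by (metis diff_zero dist_norm zero_prod_def order.strict_trans1)
    define X where "X = norm (fst q) ^ N + norm (snd q) ^ N"
    have X0: "0 \<le> X" unfolding X_def by simp
    have pq: "norm q ^ N \<le> 2 ^ N * X" unfolding X_def by (rule norm_pow_split)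
    have t1: "norm (g (H q) - PP N a (H q)) \<le> \<epsilon> / 2 * X"
    proof -
      have "norm (fst (H q)) ^ N \<le> (K * norm q) ^ N" "norm (snd (H q)) ^ N \<le> (K * norm q) ^ N"
        using nH norm_fst_le[of "H q"] norm_snd_le[of "H q"] by (auto intro!: power_mono)
      then have "norm (fst (H q)) ^ N + norm (snd (H q)) ^ N \<le> 2 * K ^ N * norm q ^ N"
        by (simp add: power_mult_distrib)
      also have "\<dots> \<le> 2 * K ^ N * (2 ^ N * X)" using pq K by (intro mult_left_mono) auto
      finally have "e1 * (norm (fst (H q)) ^ N + norm (snd (H q)) ^ N) \<le> e1 * (2 * K ^ N * (2 ^ N * X))"
        using e1 by (intro mult_left_mono) auto
      also have "\<dots> = \<epsilon> / 2 * X" unfolding e1_def using K by (simp add: field_simps)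
      finally show ?thesis using d1(2)[OF HS H0 dH] by linarith
    qed
    have t2: "norm (PP N a (H q) - PP N a' q) \<le> \<epsilon> / 2 * X"
    proof -
      have "C * (norm q * norm q ^ N) \<le> (\<bar>C\<bar> + 1) * (norm q * norm q ^ N)"
        by (intro mult_right_mono) auto
      then have "C * norm q ^ Suc N \<le> (\<bar>C\<bar> + 1) * norm q * norm q ^ N"
        by (simp add: mult_ac)
      also have "\<dots> \<le> (\<bar>C\<bar> + 1) * (\<epsilon> / (2 * 2 ^ N * (\<bar>C\<bar> + 1))) * (2 ^ N * X)"
        using nq4 pq e by (intro mult_mono) auto
      also have "\<dots> = \<epsilon> / 2 * X"
      proof -
        have cp: "\<bar>C\<bar> + 1 \<noteq> 0" "(2::real) ^ N \<noteq> 0" by auto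
        have "(\<bar>C\<bar> + 1) * (\<epsilon> / (2 * 2 ^ N * (\<bar>C\<bar> + 1))) = \<epsilon> / (2 * 2 ^ N)"
          using cp by simp
        moreover have "\<epsilon> / (2 * 2 ^ N) * (2 ^ N * X) = \<epsilon> / 2 * X"
          using cp by simp
        ultimately show ?thesis by simp
      qed
      finally show ?thesis using C(2)[OF nq0(2)] by linarith
    qed
    have "norm (g (H q) - PP N a' q) \<le> norm (g (H q) - PP N a (H q)) + norm (PP N a (H q) - PP N a' q)"
      using norm_triangle_ineq[of "g (H q) - PP N a (H q)" "PP N a (H q) - PP N a' q"] by simp
    also have "\<dots> \<le> \<epsilon> * X" using t1 t2 by simp
    finally show "norm (g (H q) - PP N a' q) \<le> \<epsilon> * (norm (fst q) ^ N + norm (snd q) ^ N)"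
      unfolding X_def .
  qed
qed

lemma real_analytic_has_derivative:
  assumes RA: "real_analytic_on U \<rho>" and pU: "p \<in> U"
  shows "\<rho> differentiable (at p)"
proof -
  obtain e c where e: "e > 0" and hs: "\<And>q. q \<in> ball p e \<Longrightarrow>
      ((\<lambda>(i,j,k,l). c (i,j,k,l) * Re (fst q - fst p) ^ i * Im (fst q - fst p) ^ j
                         * Re (snd q - snd p) ^ k * Im (snd q - snd p) ^ l) has_sum \<rho> q) UNIV"
    using RA pU unfolding real_analytic_on_def by blast
  define T where "T q = (\<lambda>(i,j,k,l). c (i,j,k,l) * Re (fst q - fst p) ^ i * Im (fst q - fst p) ^ j
                         * Re (snd q - snd p) ^ k * Im (snd q - snd p) ^ l)" for q
  define deg :: "nat \<times> nat \<times> nat \<times> nat \<Rightarrow> nat" where "deg = (\<lambda>(i,j,k,l). i + j + k + l)"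
  define \<delta> where "\<delta> = e / 4"
  have d0: "\<delta> > 0" unfolding \<delta>_def using e by simp
  define q0 where "q0 = p + (Complex \<delta> \<delta>, Complex \<delta> \<delta>)"
  have "norm (q0 - p) = 2 * \<delta>"
  proof -
    have "norm (q0 - p) = sqrt ((cmod (Complex \<delta> \<delta>))\<^sup>2 + (cmod (Complex \<delta> \<delta>))\<^sup>2)"
      unfolding q0_def by (simp add: norm_Pair)
    also have "\<dots> = sqrt ((2 * \<delta>)\<^sup>2)" by (simp add: cmod_def power2_eq_square algebra_simps)
    also have "sqrt ((2 * \<delta>)\<^sup>2) = 2 * \<delta>" using d0 by (subst real_sqrt_abs) simp
    finally show ?thesis .
  qed
  then have q0b: "q0 \<in> ball p e" unfolding \<delta>_def using e by (simp add: dist_norm norm_minus_commute)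
  define g where "g x = \<bar>c x\<bar> * \<delta> ^ deg x" for x
  have Tq0: "T q0 x = c x * \<delta> ^ deg x" for x
    unfolding T_def deg_def q0_def by (cases x) (auto simp: power_add)
  have "T q0 summable_on UNIV" using hs[OF q0b] unfolding T_def summable_on_def by blast
  then have "(\<lambda>x. norm (T q0 x)) summable_on UNIV" using summable_on_iff_abs_summable_on_real by blast
  moreover have "norm (T q0 x) = g x" for x unfolding Tq0 g_def using d0 by (simp add: abs_mult)
  ultimately have gs: "g summable_on UNIV" by simp
  define Lset :: "(nat \<times> nat \<times> nat \<times> nat) set" where
    "Lset = {(0,0,0,0),(1,0,0,0),(0,1,0,0),(0,0,1,0),(0,0,0,1)}"
  define R where "R = UNIV - Lset"
  have finL: "finite Lset" unfolding Lset_def by simp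
  have degR: "2 \<le> deg x" if "x \<in> R" for x
  proof -
    obtain i j k l where x: "x = (i,j,k,l)" by (cases x) auto
    show ?thesis using that unfolding R_def Lset_def x deg_def by (cases i; cases j; cases k; cases l) auto
  qed
  have gR: "g summable_on R" by (rule summable_on_subset_banach[OF gs]) auto
  define G where "G = infsum g R"
  have G0: "0 \<le> G" unfolding G_def by (rule infsum_nonneg) (simp add: g_def d0 less_imp_le)
  define lin where "lin h = c (1,0,0,0) * Re (fst h) + c (0,1,0,0) * Im (fst h) + c (0,0,1,0) * Re (snd h) + c (0,0,0,1) * Im (snd h)" for h :: "complex \<times> complex"
  have bl: "bounded_linear lin"
    unfolding linear_conv_bounded_linear[symmetric]
    by (rule linearI) (auto simp: lin_def algebra_simps)
  have main: "norm (\<rho> q - (\<Sum>x\<in>Lset. T q x)) \<le> (norm (q - p) / \<delta>)\<^sup>2 * G" if q: "norm (q - p) \<le> \<delta>" for q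
  proof -
    define t where "t = norm (q - p)"
    have t: "0 \<le> t" "t \<le> \<delta>" using q unfolding t_def by auto
    have qb: "q \<in> ball p e" using q d0 unfolding \<delta>_def using e by (simp add: dist_norm norm_minus_commute)
    have hq: "(T q has_sum \<rho> q) UNIV" using hs[OF qb] unfolding T_def .
    have sU: "T q summable_on UNIV" using hq summable_on_def by blast
    have sR: "T q summable_on R" by (rule summable_on_subset_banach[OF sU]) auto
    have "\<rho> q = infsum (T q) (Lset \<union> R)" using hq unfolding R_def by (simp add: infsumI)
    also have "\<dots> = infsum (T q) Lset + infsum (T q) R"
      by (rule infsum_Un_disjoint) (use finL sR in \<open>auto simp: R_def\<close>)
    finally have split: "\<rho> q - (\<Sum>x\<in>Lset. T q x) = infsum (T q) R" using finL by simp
    have coord: "\<bar>Re (fst q - fst p)\<bar> \<le> t" "\<bar>Im (fst q - fst p)\<bar> \<le> t"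
                "\<bar>Re (snd q - snd p)\<bar> \<le> t" "\<bar>Im (snd q - snd p)\<bar> \<le> t"
      using abs_Re_le_cmod[of "fst q - fst p"] abs_Im_le_cmod[of "fst q - fst p"]
            abs_Re_le_cmod[of "snd q - snd p"] abs_Im_le_cmod[of "snd q - snd p"]
            norm_fst_le[of "q - p"] norm_snd_le[of "q - p"] unfolding t_def by auto
    have tb: "norm (T q x) \<le> (t / \<delta>)\<^sup>2 * g x" if x: "x \<in> R" for x
    proof -
      obtain i j k l where x': "x = (i,j,k,l)" by (cases x) auto
      have "norm (T q x) = \<bar>c x\<bar> * \<bar>Re (fst q - fst p)\<bar> ^ i * \<bar>Im (fst q - fst p)\<bar> ^ j
                 * \<bar>Re (snd q - snd p)\<bar> ^ k * \<bar>Im (snd q - snd p)\<bar> ^ l"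
        unfolding T_def x' by (simp add: abs_mult power_abs)
      also have "\<dots> \<le> \<bar>c x\<bar> * t ^ i * t ^ j * t ^ k * t ^ l"
        using coord by (intro mult_mono power_mono mult_nonneg_nonneg zero_le_power) auto
      also have "\<dots> = \<bar>c x\<bar> * t ^ deg x" unfolding deg_def x' by (simp add: power_add mult_ac)
      also have "t ^ deg x = \<delta> ^ deg x * (t / \<delta>) ^ deg x" using d0 by (simp add: power_divide)
      also have "(t / \<delta>) ^ deg x \<le> (t / \<delta>) ^ 2"
        by (rule power_decreasing[OF degR[OF x]]) (use t d0 in auto)
      then have "\<bar>c x\<bar> * (\<delta> ^ deg x * (t / \<delta>) ^ deg x) \<le> \<bar>c x\<bar> * (\<delta> ^ deg x * (t / \<delta>) ^ 2)"
        using d0 by (intro mult_left_mono) auto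
      finally show ?thesis unfolding g_def by (simp add: mult_ac)
    qed
    have "norm (infsum (T q) R) \<le> (t / \<delta>)\<^sup>2 * G"
    proof (rule norm_infsum_le[OF has_sum_infsum[OF sR]])
      show "((\<lambda>x. (t / \<delta>)\<^sup>2 * g x) has_sum (t / \<delta>)\<^sup>2 * G) R"
        unfolding G_def by (rule has_sum_cmult_right[OF has_sum_infsum[OF gR]])
    qed (use tb in auto)
    then show ?thesis using split unfolding t_def by simp
  qed
  have Lsum: "(\<Sum>x\<in>Lset. T q x) - (\<Sum>x\<in>Lset. T p x) = lin (q - p)" for q
    unfolding Lset_def T_def lin_def by simp
  have rp: "\<rho> p = (\<Sum>x\<in>Lset. T p x)" using main[of p] d0 by simp
  have "(\<rho> has_derivative lin) (at p)"
    unfolding has_derivative_at_alt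
  proof (intro conjI bl allI impI)
    fix \<epsilon> :: real assume eps: "\<epsilon> > 0"
    define d where "d = min \<delta> (\<epsilon> * \<delta>\<^sup>2 / (G + 1))"
    have d: "d > 0" unfolding d_def using d0 eps G0 by auto
    show "\<exists>d>0. \<forall>y. norm (y - p) < d \<longrightarrow> norm (\<rho> y - \<rho> p - lin (y - p)) \<le> \<epsilon> * norm (y - p)"
    proof (intro exI[of _ d] conjI d allI impI)
      fix y assume y: "norm (y - p) < d"
      have y1: "norm (y - p) \<le> \<delta>" using y unfolding d_def by auto
      have y2: "norm (y - p) * (G + 1) \<le> \<epsilon> * \<delta>\<^sup>2"
        using y G0 unfolding d_def by (simp add: pos_less_divide_eq less_imp_le)
      have "\<rho> y - \<rho> p - lin (y - p) = \<rho> y - (\<Sum>x\<in>Lset. T y x)"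
        using Lsum[of y] rp by (simp add: algebra_simps)
      then have "norm (\<rho> y - \<rho> p - lin (y - p)) \<le> (norm (y - p) / \<delta>)\<^sup>2 * G" using main[OF y1] by simp
      also have "\<dots> = norm (y - p) * (norm (y - p) * G / \<delta>\<^sup>2)" by (simp add: power2_eq_square field_simps)
      also have "\<dots> \<le> norm (y - p) * \<epsilon>"
      proof (rule mult_left_mono)
        have "norm (y - p) * G \<le> norm (y - p) * (G + 1)" by (simp add: mult_left_mono)
        also have "\<dots> \<le> \<epsilon> * \<delta>\<^sup>2" by (rule y2)
        finally show "norm (y - p) * G / \<delta>\<^sup>2 \<le> \<epsilon>" using d0 by (simp add: divide_le_eq)
      qed simp
      finally show "norm (\<rho> y - \<rho> p - lin (y - p)) \<le> \<epsilon> * norm (y - p)" by (simp add: mult.commute)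
    qed
  qed
  then show ?thesis unfolding differentiable_def by blast
qed

lemma Arg_mult_small:
  assumes a: "a \<noteq> 0" and b: "b \<noteq> 0" and s: "\<bar>Arg a\<bar> + \<bar>Arg b\<bar> < pi"
  shows "Arg (a * b) = Arg a + Arg b"
proof (rule Arg_unique)
  have "a * b = of_real (norm a) * exp (\<i> * of_real (Arg a)) * (of_real (norm b) * exp (\<i> * of_real (Arg b)))"
    using Arg_eq[OF a] Arg_eq[OF b] by simp
  also have "\<dots> = of_real (norm a * norm b) * exp (\<i> * of_real (Arg a + Arg b))"
    by (simp add: exp_add[symmetric] algebra_simps)
  finally show "of_real (norm a * norm b) * exp (\<i> * of_real (Arg a + Arg b)) = a * b" by simp
  show "0 < norm a * norm b" using a b by simp
  show "- pi < Arg a + Arg b" "Arg a + Arg b \<le> pi" using s by auto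
qed

lemma sector_stable:
  assumes "0 < \<alpha>" "\<alpha> < pi / 2"
  shows "\<exists>e>0. \<forall>w u. w \<noteq> 0 \<and> \<bar>Arg w\<bar> < \<alpha> / 2 \<and> norm (u - 1) < e \<longrightarrow> w * u \<noteq> 0 \<and> \<bar>Arg (w * u)\<bar> < \<alpha>"
proof -
  have "isCont Arg 1" by (rule continuous_at_Arg) (auto simp: nonpos_Reals_def)
  then obtain d where d: "d > 0" "\<And>u. dist u 1 < d \<Longrightarrow> dist (Arg u) (Arg 1) < \<alpha> / 2"
    unfolding continuous_at_eps_delta using assms by (metis half_gt_zero)
  show ?thesis
  proof (intro exI[of _ "min d 1"] conjI allI impI)
    fix w u :: complex assume h: "w \<noteq> 0 \<and> \<bar>Arg w\<bar> < \<alpha> / 2 \<and> norm (u - 1) < min d 1"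
    have u0: "u \<noteq> 0"
    proof
      assume "u = 0" then show False using h by simp
    qed
    have au: "\<bar>Arg u\<bar> < \<alpha> / 2" using d(2)[of u] h by (simp add: dist_norm)
    show "w * u \<noteq> 0" using h u0 by simp
    have "Arg (w * u) = Arg w + Arg u"
      by (rule Arg_mult_small) (use h u0 au assms in auto)
    then show "\<bar>Arg (w * u)\<bar> < \<alpha>" using h au by linarith
  qed (use d in auto)
qed

lemma pair_deriv:
  assumes "holo2 S (fst \<circ> f)" "holo2 S (snd \<circ> f)" "p \<in> S"
  shows "\<exists>L. (f has_derivative L) (at p) \<and> (\<forall>c v. L (cmul2 c v) = cmul2 c (L v))"
proof -
  obtain L1 where L1: "((fst \<circ> f) has_derivative L1) (at p)" "\<And>c v. L1 (cmul2 c v) = c * L1 v"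
    using holo2_D[OF assms(1,3)] by blast
  obtain L2 where L2: "((snd \<circ> f) has_derivative L2) (at p)" "\<And>c v. L2 (cmul2 c v) = c * L2 v"
    using holo2_D[OF assms(2,3)] by blast
  have "((\<lambda>q. ((fst \<circ> f) q, (snd \<circ> f) q)) has_derivative (\<lambda>v. (L1 v, L2 v))) (at p)"
    by (rule has_derivative_Pair[OF L1(1) L2(1)])
  moreover have "(\<lambda>q. ((fst \<circ> f) q, (snd \<circ> f) q)) = f" by auto
  ultimately show ?thesis using L1(2) L2(2) by (intro exI[of _ "\<lambda>v. (L1 v, L2 v)"]) (auto simp: cmul2_def)
qed

lemma deriv_eventually_zero:
  fixes f :: "'a::real_normed_vector \<Rightarrow> 'b::real_normed_vector"
  assumes "(f has_derivative D) (at x)" "open S" "x \<in> S" "\<And>y. y \<in> S \<Longrightarrow> f y = 0"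
  shows "D = (\<lambda>_. 0)"
proof -
  have "((\<lambda>_. 0) has_derivative D) (at x)"
    by (rule has_derivative_transform_within_open[OF assms(1,2,3)]) (use assms(4) in auto)
  then show ?thesis using has_derivative_unique has_derivative_const by blast
qed

lemma deriv_eventually_id:
  fixes f :: "'a::real_normed_vector \<Rightarrow> 'a"
  assumes "(f has_derivative D) (at x)" "open S" "x \<in> S" "\<And>y. y \<in> S \<Longrightarrow> f y = y"
  shows "D = (\<lambda>v. v)"
proof -
  have "((\<lambda>y. y) has_derivative D) (at x)"
    by (rule has_derivative_transform_within_open[OF assms(1,2,3)]) (use assms(4) in auto)
  then show ?thesis using has_derivative_unique has_derivative_ident by blast
qed

lemma cont_ball:
  fixes f :: "'a::metric_space \<Rightarrow> 'b::metric_space"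
  assumes "isCont f x" "open Op" "f x \<in> Op"
  shows "\<exists>d>0. \<forall>y. dist y x < d \<longrightarrow> f y \<in> Op"
proof -
  obtain e where e: "e > 0" "ball (f x) e \<subseteq> Op" using assms(2,3) open_contains_ball by blast
  obtain d where "d > 0" "\<And>y. dist y x < d \<Longrightarrow> dist (f y) (f x) < e"
    using assms(1) e(1) unfolding continuous_at_eps_delta by blast
  then show ?thesis using e(2) by (intro exI[of _ d]) (auto simp: dist_commute)
qed

lemma chart_basic:
  assumes "coord_chart U \<Phi>"
  shows "open U" "(0,0) \<in> U" "open (\<Phi> ` U)" "(0,0) \<in> \<Phi> ` U" "\<Phi> (0,0) = (0,0)"
    "inv_into U \<Phi> (0,0) = (0,0)"
    "\<And>q. q \<in> \<Phi> ` U \<Longrightarrow> inv_into U \<Phi> q \<in> U"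
    "\<And>q. q \<in> \<Phi> ` U \<Longrightarrow> \<Phi> (inv_into U \<Phi> q) = q"
    "\<And>p. p \<in> U \<Longrightarrow> inv_into U \<Phi> (\<Phi> p) = p"
    "\<And>p. p \<in> U \<Longrightarrow> \<exists>L. (\<Phi> has_derivative L) (at p) \<and> (\<forall>c v. L (cmul2 c v) = cmul2 c (L v))"
    "\<And>q. q \<in> \<Phi> ` U \<Longrightarrow> \<exists>L. (inv_into U \<Phi> has_derivative L) (at q) \<and> (\<forall>c v. L (cmul2 c v) = cmul2 c (L v))"
    "\<And>q. q \<in> \<Phi> ` U \<Longrightarrow> isCont (inv_into U \<Phi>) q"
    "holo2 U (\<lambda>p. fst (\<Phi> p))" "holo2 U (\<lambda>p. snd (\<Phi> p))"
    "holo2 (\<Phi> ` U) (\<lambda>q. fst (inv_into U \<Phi> q))" "holo2 (\<Phi> ` U) (\<lambda>q. snd (inv_into U \<Phi> q))"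
proof -
  note c = assms[unfolded coord_chart_def]
  show o: "open U" "(0,0) \<in> U" "open (\<Phi> ` U)" "\<Phi> (0,0) = (0,0)" using c by auto
  show "(0,0) \<in> \<Phi> ` U" using c by (metis image_eqI)
  show "inv_into U \<Phi> (0,0) = (0,0)" using c by (metis inv_into_f_f)
  show "\<And>q. q \<in> \<Phi> ` U \<Longrightarrow> inv_into U \<Phi> q \<in> U" by (rule inv_into_into)
  show "\<And>q. q \<in> \<Phi> ` U \<Longrightarrow> \<Phi> (inv_into U \<Phi> q) = q" by (rule f_inv_into_f)
  show "\<And>p. p \<in> U \<Longrightarrow> inv_into U \<Phi> (\<Phi> p) = p" using c by (metis inv_into_f_f)
  show "\<And>p. p \<in> U \<Longrightarrow> \<exists>L. (\<Phi> has_derivative L) (at p) \<and> (\<forall>c v. L (cmul2 c v) = cmul2 c (L v))"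
    using c by (intro pair_deriv) auto
  show d: "\<And>q. q \<in> \<Phi> ` U \<Longrightarrow> \<exists>L. (inv_into U \<Phi> has_derivative L) (at q) \<and> (\<forall>c v. L (cmul2 c v) = cmul2 c (L v))"
    using c by (intro pair_deriv) auto
  show "\<And>q. q \<in> \<Phi> ` U \<Longrightarrow> isCont (inv_into U \<Phi>) q"
    using d has_derivative_continuous by blast
  show "holo2 U (\<lambda>p. fst (\<Phi> p))" "holo2 U (\<lambda>p. snd (\<Phi> p))"
    "holo2 (\<Phi> ` U) (\<lambda>q. fst (inv_into U \<Phi> q))" "holo2 (\<Phi> ` U) (\<lambda>q. snd (inv_into U \<Phi> q))"
    using c by (auto simp: o_def)
qed

lemma curve_deriv:
  fixes \<gamma> :: "real \<Rightarrow> complex \<times> complex"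
  assumes g: "(\<gamma> has_derivative (\<lambda>t. t *\<^sub>R v)) (at 0)" "\<gamma> 0 = (0,0)"
    and G0: "(G0 has_derivative L0) (at (0,0))" "G0 (0,0) = (0,0)"
    and r: "(\<rho> has_derivative l) (at (0,0))"
    and z: "open S" "0 \<in> S" "\<And>t. t \<in> S \<Longrightarrow> \<rho> (G0 (\<gamma> t)) = (0::real)"
  shows "l (L0 v) = 0"
proof -
  have "((G0 \<circ> \<gamma>) has_derivative (L0 \<circ> (\<lambda>t. t *\<^sub>R v))) (at 0)"
    by (rule diff_chain_at[OF g(1)]) (use G0 g(2) in simp)
  moreover have "G0 (\<gamma> 0) = (0,0)" using g(2) G0(2) by simp
  ultimately have "((\<rho> \<circ> (G0 \<circ> \<gamma>)) has_derivative (l \<circ> (L0 \<circ> (\<lambda>t. t *\<^sub>R v)))) (at 0)"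
    using r diff_chain_at[of "G0 \<circ> \<gamma>" "L0 \<circ> (\<lambda>t. t *\<^sub>R v)" 0 \<rho> l] by simp
  then have "(l \<circ> (L0 \<circ> (\<lambda>t. t *\<^sub>R v))) = (\<lambda>_. 0)"
    by (rule deriv_eventually_zero[OF _ z(1,2)]) (use z(3) in simp)
  then show ?thesis by (metis comp_apply scale_one)
qed

lemma in_ball00: "(q::complex \<times> complex) \<in> ball (0,0) r \<longleftrightarrow> norm q < r"
  by (simp add: zero_prod_def[symmetric])

lemma transition:
  assumes A0: "admissible M U0 \<Phi>0" and A1: "admissible M U \<Phi>" and R: "defining_fn M Ur \<rho>"
    and NM: "(0,0) \<in> complex_locus M"
  shows "\<exists>\<rho>0 c. \<rho>0 > 0 \<and> ball (0,0) \<rho>0 \<subseteq> \<Phi> ` U \<and> (\<forall>q\<in>ball (0,0) \<rho>0. inv_into U \<Phi> q \<in> U0) \<and>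
    holo2 (ball (0,0) \<rho>0) (\<lambda>q. fst (\<Phi>0 (inv_into U \<Phi> q))) \<and>
    holo2 (ball (0,0) \<rho>0) (\<lambda>q. snd (\<Phi>0 (inv_into U \<Phi> q))) \<and>
    \<Phi>0 (inv_into U \<Phi> (0,0)) = (0,0) \<and> Im c = 0 \<and> c \<noteq> 0 \<and>
    (\<forall>\<epsilon>>0. \<exists>\<delta>>0. \<forall>z w. norm z < \<delta> \<and> norm w < \<delta> \<longrightarrow>
        norm (snd (\<Phi>0 (inv_into U \<Phi> (z,w))) - c * w) \<le> \<epsilon> * norm w)"
proof -
  obtain W0 where C0: "coord_chart U0 \<Phi>0" and W0: "open W0" "(0,0) \<in> W0" "W0 \<subseteq> U0"
      "\<And>p. p \<in> W0 \<Longrightarrow> p \<in> complex_locus M \<longleftrightarrow> snd (\<Phi>0 p) = 0"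
      "\<And>p. p \<in> W0 \<Longrightarrow> fst (\<Phi>0 p) = 0 \<Longrightarrow> Im (snd (\<Phi>0 p)) = 0 \<Longrightarrow> p \<in> M"
    using A0 unfolding admissible_def by blast
  obtain W where C: "coord_chart U \<Phi>" and W: "open W" "(0,0) \<in> W" "W \<subseteq> U"
      "\<And>p. p \<in> W \<Longrightarrow> p \<in> complex_locus M \<longleftrightarrow> snd (\<Phi> p) = 0"
      "\<And>p. p \<in> W \<Longrightarrow> fst (\<Phi> p) = 0 \<Longrightarrow> Im (snd (\<Phi> p)) = 0 \<Longrightarrow> p \<in> M"
    using A1 unfolding admissible_def by blast
  have Ur: "open Ur" "(0,0) \<in> Ur" "real_analytic_on Ur \<rho>" "frechet_derivative \<rho> (at (0,0)) \<noteq> (\<lambda>v. 0)"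
      "\<And>p. p \<in> M \<Longrightarrow> p \<in> Ur \<Longrightarrow> \<rho> p = 0"
    using R unfolding defining_fn_def by auto
  have CLM: "\<And>p. p \<in> complex_locus M \<Longrightarrow> p \<in> M" unfolding complex_locus_def by blast
  define G where "G = inv_into U \<Phi>"
  define G0 where "G0 = inv_into U0 \<Phi>0"
  define h1 where "h1 q = fst (\<Phi>0 (G q))" for q
  define h2 where "h2 q = snd (\<Phi>0 (G q))" for q
  note cb = chart_basic[OF C, folded G_def]
  note cb0 = chart_basic[OF C0, folded G0_def]
  have "open (W \<inter> W0 \<inter> Ur)" "G (0,0) \<in> W \<inter> W0 \<inter> Ur" using W(1,2) W0(1,2) Ur(1,2) cb(6) by auto
  then obtain d1 where d1: "d1 > 0" "\<And>y. dist y (0,0) < d1 \<Longrightarrow> G y \<in> W \<inter> W0 \<inter> Ur"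
    using cont_ball[OF cb(12)[OF cb(4)]] by blast
  obtain d2 where d2: "d2 > 0" "ball (0,0) d2 \<subseteq> \<Phi> ` U" using cb(3,4) open_contains_ball by blast
  define \<rho>0 where "\<rho>0 = min d1 d2"
  define B where "B = ball (0::complex,0::complex) \<rho>0"
  have r0: "\<rho>0 > 0" unfolding \<rho>0_def using d1 d2 by simp
  have B: "q \<in> \<Phi> ` U" "G q \<in> U" "\<Phi> (G q) = q" "G q \<in> W" "G q \<in> W0" "G q \<in> Ur" "G q \<in> U0"
    if "q \<in> B" for q
  proof -
    show q: "q \<in> \<Phi> ` U" using that d2 unfolding B_def \<rho>0_def by auto
    show "G q \<in> U" "\<Phi> (G q) = q" using cb(7,8)[OF q] .
    have "dist q (0,0) < d1" using that unfolding B_def \<rho>0_def by (simp add: dist_commute)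
    then show "G q \<in> W" "G q \<in> W0" "G q \<in> Ur" using d1(2) by auto
    then show "G q \<in> U0" using W0(3) by auto
  qed
  have B0: "(0,0) \<in> B" unfolding B_def using r0 by simp
  have normB: "(z,w) \<in> B" if "norm z + norm w < \<rho>0" for z w
  proof -
    have "norm (z,w) \<le> norm z + norm w" by (rule norm_Pair_le)
    then show ?thesis using that unfolding B_def in_ball00 by simp
  qed
  have hol1: "holo2 B h1"
  proof -
    have "holo2 B (\<lambda>q. fst (\<Phi>0 (fst (G q), snd (G q))))"
      by (rule holo2_compose[OF cb0(13) holo2_subset[OF cb(15)] holo2_subset[OF cb(16)]])
        (use B in \<open>auto simp: B_def\<close>)
    then show ?thesis unfolding h1_def by simp
  qed
  have hol2: "holo2 B h2"
  proof -
    have "holo2 B (\<lambda>q. snd (\<Phi>0 (fst (G q), snd (G q))))"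
      by (rule holo2_compose[OF cb0(14) holo2_subset[OF cb(15)] holo2_subset[OF cb(16)]])
        (use B in \<open>auto simp: B_def\<close>)
    then show ?thesis unfolding h2_def by simp
  qed
  have H00: "\<Phi>0 (G (0,0)) = (0,0)" using cb(6) cb0(5) by simp
  have h2z: "h2 (z,0) = 0" if "(z,0) \<in> B" for z
  proof -
    have "snd (\<Phi> (G (z,0))) = 0" using B(3)[OF that] by simp
    then have "G (z,0) \<in> complex_locus M" using W(4)[OF B(4)[OF that]] by simp
    then show ?thesis unfolding h2_def using W0(4)[OF B(5)[OF that]] by simp
  qed
  obtain L2 where L2: "(h2 has_derivative L2) (at (0,0))" "\<And>c v. L2 (cmul2 c v) = c * L2 v"
    using holo2_D[OF hol2 B0] by blast
  obtain L1 where L1: "(h1 has_derivative L1) (at (0,0))" "\<And>c v. L1 (cmul2 c v) = c * L1 v"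
    using holo2_D[OF hol1 B0] by blast
  define c where "c = L2 (0,1)"
  have L2_10: "L2 (1,0) = 0"
  proof -
    have "((\<lambda>t::complex. (t,0::complex)) has_derivative (\<lambda>t. (t,0))) (at 0)"
      by (rule has_derivative_Pair[OF has_derivative_ident has_derivative_const])
    then have "((h2 \<circ> (\<lambda>t. (t,0))) has_derivative (L2 \<circ> (\<lambda>t. (t,0)))) (at 0)"
      by (rule diff_chain_at) (use L2(1) in \<open>simp only: zero_prod_def\<close>)
    then have "(L2 \<circ> (\<lambda>t. (t,0))) = (\<lambda>_. 0)"
    proof (rule deriv_eventually_zero[where S="ball 0 \<rho>0"])
      show "open (ball (0::complex) \<rho>0)" by simp
      show "(0::complex) \<in> ball 0 \<rho>0" using r0 by simp
      fix t :: complex assume "t \<in> ball 0 \<rho>0"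
      then have "norm t + norm (0::complex) < \<rho>0" by simp
      then have "(t,0) \<in> B" by (rule normB)
      then show "(h2 \<circ> (\<lambda>t. (t, 0))) t = 0" using h2z by simp
    qed
    then show ?thesis by (metis comp_apply)
  qed
  have L2form: "L2 v = snd v * c" for v
  proof -
    have "L2 v = fst v * L2 (1,0) + snd v * L2 (0,1)" by (rule cl_form[OF L2])
    then show ?thesis using L2_10 unfolding c_def by simp
  qed
  obtain l where l: "(\<rho> has_derivative l) (at (0,0))" "l \<noteq> (\<lambda>v. 0)"
    using real_analytic_has_derivative[OF Ur(3,2)] Ur(4) frechet_derivative_works by blast
  obtain L0 where L0: "(G0 has_derivative L0) (at (0,0))"
    using cb0(11)[OF cb0(4)] by blast
  obtain LF0 where LF0: "(\<Phi>0 has_derivative LF0) (at (0,0))"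
    using cb0(10)[OF cb0(2)] by blast
  have L0LF0: "L0 \<circ> LF0 = (\<lambda>v. v)"
  proof (rule deriv_eventually_id[OF _ cb0(1) cb0(2)])
    show "((G0 \<circ> \<Phi>0) has_derivative L0 \<circ> LF0) (at (0,0))"
      by (rule diff_chain_at[OF LF0]) (use L0 cb0(5) in simp)
    fix y assume "y \<in> U0" then show "(G0 \<circ> \<Phi>0) y = y" using cb0(9) by simp
  qed
  define lam where "lam v = l (L0 v)" for v
  have lin_lam: "linear lam"
    unfolding lam_def
    using linear_compose[OF has_derivative_linear[OF L0] has_derivative_linear[OF l(1)]]
    by (simp add: o_def)
  have lam_nz: "\<exists>v. lam v \<noteq> 0"
  proof -
    have "\<exists>v. l v \<noteq> 0"
    proof (rule ccontr)
      assume "\<not> (\<exists>v. l v \<noteq> 0)"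
      then have "l = (\<lambda>v. 0)" by auto
      then show False using l(2) by simp
    qed
    then obtain v where "l v \<noteq> 0" by blast
    moreover have "L0 (LF0 v) = v" using L0LF0 by (metis comp_apply)
    ultimately show ?thesis unfolding lam_def by metis
  qed
  have "open (W0 \<inter> Ur \<inter> U)" "G0 (0,0) \<in> W0 \<inter> Ur \<inter> U" using W0(1,2) Ur(1,2) cb(1,2) cb0(6) by auto
  then obtain d3 where d3: "d3 > 0" "\<And>y. dist y (0,0) < d3 \<Longrightarrow> G0 y \<in> W0 \<inter> Ur \<inter> U"
    using cont_ball[OF cb0(12)[OF cb0(4)]] by blast
  obtain d4 where d4: "d4 > 0" "ball (0,0) d4 \<subseteq> \<Phi>0 ` U0" using cb0(3,4) open_contains_ball by blast
  define e0 where "e0 = min d3 d4"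
  have e0: "e0 > 0" unfolding e0_def using d3 d4 by simp
  have E0: "G0 y \<in> U0" "\<Phi>0 (G0 y) = y" "G0 y \<in> W0" "G0 y \<in> Ur" "G0 y \<in> U" if "norm y < e0" for y
  proof -
    have y: "y \<in> \<Phi>0 ` U0" using that d4 unfolding e0_def by (auto simp: dist_norm zero_prod_def[symmetric])
    show "G0 y \<in> U0" "\<Phi>0 (G0 y) = y" using cb0(7,8)[OF y] .
    have "dist y (0,0) < d3" using that unfolding e0_def by (simp add: dist_norm zero_prod_def[symmetric])
    then show "G0 y \<in> W0" "G0 y \<in> Ur" "G0 y \<in> U" using d3(2) by auto
  qed
  have lam_z0: "lam (z,0) = 0" for z
  proof -
    define S where "S = ball (0::real) (e0 / (norm z + 1))"
    have "l (L0 (z,0)) = 0"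
    proof (rule curve_deriv[where \<gamma>="\<lambda>t. (of_real t * z, 0)" and S=S, OF _ _ L0 cb0(6) l(1)])
      show "((\<lambda>t. (complex_of_real t * z, 0)) has_derivative (\<lambda>t. t *\<^sub>R (z, 0))) (at 0)"
        by (auto intro!: derivative_eq_intros simp: scaleR_conv_of_real)
      have pz: "norm z + 1 > 0" by (simp add: add_nonneg_pos)
      show "open S" "0 \<in> S" unfolding S_def using divide_pos_pos[OF e0 pz] by auto
      fix t assume t: "t \<in> S"
      have "norm (complex_of_real t * z, 0::complex) = \<bar>t\<bar> * norm z" by (simp add: norm_mult)
      also have "\<dots> < e0"
      proof -
        have "\<bar>t\<bar> < e0 / (norm z + 1)" using t unfolding S_def by simp
        then have "\<bar>t\<bar> * (norm z + 1) < e0" using pz by (simp add: pos_less_divide_eq)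
        then show ?thesis by (smt (verit) abs_ge_zero mult_left_mono norm_ge_zero)
      qed
      finally have n: "norm (complex_of_real t * z, 0::complex) < e0" .
      let ?p = "G0 (complex_of_real t * z, 0)"
      have "snd (\<Phi>0 ?p) = 0" using E0(2)[OF n] by simp
      then have "?p \<in> complex_locus M" using W0(4)[OF E0(3)[OF n]] by simp
      then show "\<rho> ?p = 0" using Ur(5) CLM E0(4)[OF n] by blast
    qed simp
    then show ?thesis unfolding lam_def .
  qed
  have lam_01: "lam (0,1) = 0"
  proof -
    have "l (L0 (0,1)) = 0"
    proof (rule curve_deriv[where \<gamma>="\<lambda>t. (0, of_real t)" and S="ball 0 e0", OF _ _ L0 cb0(6) l(1)])
      show "((\<lambda>t. (0, complex_of_real t)) has_derivative (\<lambda>t. t *\<^sub>R (0, 1))) (at 0)"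
        by (auto intro!: derivative_eq_intros simp: scaleR_conv_of_real)
      fix t :: real assume t: "t \<in> ball 0 e0"
      have n: "norm (0::complex, complex_of_real t) < e0" using t by (simp add: dist_norm)
      let ?p = "G0 (0, complex_of_real t)"
      have "?p \<in> M" using W0(5)[OF E0(3)[OF n]] E0(2)[OF n] by simp
      then show "\<rho> ?p = 0" using Ur(5) E0(4)[OF n] by blast
    qed (use e0 in auto)
    then show ?thesis unfolding lam_def .
  qed
  define LH where "LH v = (L1 v, L2 v)" for v
  have LH: "((\<lambda>q. \<Phi>0 (G q)) has_derivative LH) (at (0,0))"
  proof -
    have "((\<lambda>q. (h1 q, h2 q)) has_derivative LH) (at (0,0))"
      unfolding LH_def by (rule has_derivative_Pair[OF L1(1) L2(1)])
    moreover have "(\<lambda>q. (h1 q, h2 q)) = (\<lambda>q. \<Phi>0 (G q))" unfolding h1_def h2_def by auto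
    ultimately show ?thesis by simp
  qed
  have lam_LH: "lam (LH (0,1)) = 0"
  proof -
    have "l (L0 (LH (0,1))) = 0"
    proof (rule curve_deriv[where \<gamma>="\<lambda>t. \<Phi>0 (G (0, of_real t))" and S="ball 0 \<rho>0", OF _ _ L0 cb0(6) l(1)])
      have "((\<lambda>t. (0::complex, complex_of_real t)) has_derivative (\<lambda>t. (0, complex_of_real t))) (at 0)"
        by (auto intro!: derivative_eq_intros)
      then have "(((\<lambda>q. \<Phi>0 (G q)) \<circ> (\<lambda>t. (0, complex_of_real t))) has_derivative (LH \<circ> (\<lambda>t. (0, complex_of_real t)))) (at 0)"
        by (rule diff_chain_at) (use LH in simp)
      moreover have "(LH \<circ> (\<lambda>t. (0, complex_of_real t))) = (\<lambda>t. t *\<^sub>R LH (0,1))"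
      proof
        fix t :: real
        have lin: "linear LH" using has_derivative_linear[OF LH] .
        have e: "(0::complex, complex_of_real t) = t *\<^sub>R (0,1)" by (simp add: scaleR_conv_of_real)
        show "(LH \<circ> (\<lambda>t. (0, complex_of_real t))) t = t *\<^sub>R LH (0, 1)"
          unfolding comp_apply e by (rule linear_scale[OF lin])
      qed
      ultimately show "((\<lambda>t. \<Phi>0 (G (0, complex_of_real t))) has_derivative (\<lambda>t. t *\<^sub>R LH (0, 1))) (at 0)"
        by (simp add: o_def)
      show "\<Phi>0 (G (0, complex_of_real 0)) = (0, 0)" using H00 by simp
      fix t :: real assume t: "t \<in> ball 0 \<rho>0"
      have q: "(0, complex_of_real t) \<in> B" using t normB[of 0 "complex_of_real t"] by (simp add: dist_norm)
      have "G0 (\<Phi>0 (G (0, complex_of_real t))) = G (0, complex_of_real t)" using cb0(9) B(7)[OF q] by simp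
      moreover have "G (0, complex_of_real t) \<in> M" using W(5)[OF B(4)[OF q]] B(3)[OF q] by simp
      ultimately show "\<rho> (G0 (\<Phi>0 (G (0, complex_of_real t)))) = 0" using Ur(5) B(6)[OF q] by simp
    qed (use r0 in auto)
    then show ?thesis unfolding lam_def .
  qed
  have c_real: "Im c = 0"
  proof (rule ccontr)
    assume nc: "Im c \<noteq> 0"
    have "LH (0,1) = (L1 (0,1), 0) + Re c *\<^sub>R (0,1) + Im c *\<^sub>R (0,\<i>)"
      unfolding LH_def L2form by (simp add: complex_eq_iff)
    then have "lam (LH (0,1)) = lam (L1 (0,1), 0) + Re c *\<^sub>R lam (0,1) + Im c *\<^sub>R lam (0,\<i>)"
      by (simp only: linear_add[OF lin_lam] linear_scale[OF lin_lam])
    then have "lam (LH (0,1)) = lam (L1 (0,1), 0) + Re c * lam (0,1) + Im c * lam (0,\<i>)"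
      by simp
    then have "Im c * lam (0,\<i>) = 0" using lam_LH lam_z0 lam_01 by simp
    then have li: "lam (0,\<i>) = 0" using nc by simp
    have "lam v = 0" for v
    proof -
      have sx: "Re x *\<^sub>R (1::complex) + Im x *\<^sub>R \<i> = x" for x by (simp add: complex_eq_iff)
      have "v = (fst v, 0) + Re (snd v) *\<^sub>R (0,1) + Im (snd v) *\<^sub>R (0,\<i>)"
        by (simp add: sx)
      then have "lam v = lam (fst v, 0) + Re (snd v) *\<^sub>R lam (0,1) + Im (snd v) *\<^sub>R lam (0,\<i>)"
        by (metis linear_add[OF lin_lam] linear_scale[OF lin_lam])
      then have "lam v = lam (fst v, 0) + Re (snd v) * lam (0,1) + Im (snd v) * lam (0,\<i>)"
        by simp
      then show ?thesis using lam_z0 lam_01 li by simp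
    qed
    then show False using lam_nz by blast
  qed
  have c_nz: "c \<noteq> 0"
  proof
    assume c0: "c = 0"
    obtain LF where LF: "(\<Phi> has_derivative LF) (at (0,0))" using cb(10)[OF cb(2)] by blast
    have "((\<lambda>q. \<Phi>0 (G q)) \<circ> (\<Phi> \<circ> G0) has_derivative LH \<circ> (LF \<circ> L0)) (at (0,0))"
    proof (rule diff_chain_at)
      show "((\<Phi> \<circ> G0) has_derivative LF \<circ> L0) (at (0,0))"
        by (rule diff_chain_at[OF L0]) (use LF cb0(6) in simp)
      show "((\<lambda>q. \<Phi>0 (G q)) has_derivative LH) (at ((\<Phi> \<circ> G0) (0,0)))"
        using LH cb0(6) cb(5) by simp
    qed
    then have "LH \<circ> (LF \<circ> L0) = (\<lambda>v. v)"
    proof (rule deriv_eventually_id[where S="ball (0,0) e0"])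
      fix y :: "complex \<times> complex" assume "y \<in> ball (0,0) e0"
      then have n: "norm y < e0" by (simp add: dist_norm zero_prod_def[symmetric])
      show "((\<lambda>q. \<Phi>0 (G q)) \<circ> (\<Phi> \<circ> G0)) y = y"
        using cb(9)[OF E0(5)[OF n]] E0(2)[OF n] by simp
    qed (use e0 in auto)
    then have "snd (LH (LF (L0 (0,1)))) = 1" by (metis comp_apply snd_conv)
    moreover have "snd (LH v) = 0" for v unfolding LH_def L2form c0 by simp
    ultimately show False by simp
  qed
  have est: "\<forall>\<epsilon>>0. \<exists>\<delta>>0. \<forall>z w. norm z < \<delta> \<and> norm w < \<delta> \<longrightarrow> norm (h2 (z,w) - c * w) \<le> \<epsilon> * norm w"
  proof (intro allI impI)
    fix \<epsilon> :: real assume eps: "\<epsilon> > 0"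
    have "\<forall>e>0. \<exists>d>0. \<forall>y. norm (y - (0,0)) < d \<longrightarrow> norm (h2 y - h2 (0,0) - L2 (y - (0,0))) \<le> e * norm (y - (0,0))"
      using L2(1) unfolding has_derivative_at_alt by blast
    then obtain d where d0: "d > 0" and dd: "\<forall>y. norm (y - (0,0)) < d \<longrightarrow> norm (h2 y - h2 (0,0) - L2 (y - (0,0))) \<le> \<epsilon> / 3 * norm (y - (0,0))"
      using eps by (meson divide_pos_pos zero_less_numeral)
    have h200: "h2 (0,0) = 0" unfolding h2_def using H00 by simp
    have d: "d > 0" "\<And>y. norm y < d \<Longrightarrow> norm (h2 y - snd y * c) \<le> \<epsilon> / 3 * norm y"
    proof -
      show "d > 0" by (rule d0)
      fix y :: "complex \<times> complex" assume ny: "norm y < d"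
      have ey: "y - (0,0) = y" by (simp add: zero_prod_def[symmetric])
      have "norm (h2 y - h2 (0,0) - L2 (y - (0,0))) \<le> \<epsilon> / 3 * norm (y - (0,0))"
        using dd[rule_format, of y] ny unfolding ey by blast
      then show "norm (h2 y - snd y * c) \<le> \<epsilon> / 3 * norm y"
        unfolding ey h200 L2form by simp
    qed
    define s where "s = min d \<rho>0 / 2"
    have s: "s > 0" "2 * s \<le> d" "2 * s \<le> \<rho>0" unfolding s_def using d r0 by auto
    show "\<exists>\<delta>>0. \<forall>z w. norm z < \<delta> \<and> norm w < \<delta> \<longrightarrow> norm (h2 (z,w) - c * w) \<le> \<epsilon> * norm w"
    proof (intro exI[of _ s] conjI s(1) allI impI)
      fix z w :: complex assume zw: "norm z < s \<and> norm w < s"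
      define \<phi> where "\<phi> \<xi> = (h2 (z, of_real s * \<xi>) - c * (of_real s * \<xi>)) / of_real (\<epsilon> * s)" for \<xi>
      have inB: "(z, of_real s * \<xi>) \<in> B" if "norm \<xi> < 1" for \<xi>
      proof -
        have "norm (of_real s * \<xi>) < s" using that s by (simp add: norm_mult)
        then show ?thesis using zw s by (intro normB) auto
      qed
      have hol: "\<phi> holomorphic_on ball 0 1"
      proof -
        have "(\<lambda>w. h2 (z,w)) holomorphic_on (\<lambda>\<xi>. of_real s * \<xi>) ` ball 0 1"
          by (rule holo2_holo2[OF hol2]) (use inB in auto)
        then have "((\<lambda>w. h2 (z,w)) \<circ> (\<lambda>\<xi>. of_real s * \<xi>)) holomorphic_on ball 0 1"
          by (intro holomorphic_on_compose) (auto intro!: holomorphic_intros)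
        then show ?thesis unfolding \<phi>_def o_def by (intro holomorphic_intros) auto
      qed
      have phi0: "\<phi> 0 = 0" unfolding \<phi>_def using h2z[of z] inB[of 0] by simp
      have phib: "norm (\<phi> \<xi>) < 1" if xi: "norm \<xi> < 1" for \<xi>
      proof -
        let ?y = "(z, of_real s * \<xi>)"
        have ny: "norm ?y < 2 * s"
        proof -
          have "norm ?y \<le> norm z + norm (of_real s * \<xi>)" by (rule norm_Pair_le)
          also have "norm (of_real s * \<xi>) < s" using xi s by (simp add: norm_mult)
          finally show ?thesis using zw by simp
        qed
        have "norm (h2 ?y - c * (of_real s * \<xi>)) \<le> \<epsilon> / 3 * norm ?y"
          using d(2)[of ?y] ny s by (simp add: mult.commute)
        also have "\<dots> < \<epsilon> * s"
        proof -
          have "norm ?y < s * 3" using ny s(1) by linarith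
          then show ?thesis using eps by simp
        qed
        finally have "norm (h2 ?y - c * (of_real s * \<xi>)) < \<epsilon> * s" .
        moreover have nes: "norm (complex_of_real (\<epsilon> * s)) = \<epsilon> * s" using eps s(1) by (simp only: norm_of_real abs_of_pos mult_pos_pos)
        ultimately show ?thesis unfolding \<phi>_def norm_divide nes using eps s(1) by (simp add: divide_less_eq)
      qed
      show "norm (h2 (z,w) - c * w) \<le> \<epsilon> * norm w"
      proof -
        define \<xi> where "\<xi> = w / of_real s"
        have nxi: "norm \<xi> < 1" unfolding \<xi>_def using zw s by (simp add: norm_divide divide_less_eq)
        have "norm (\<phi> \<xi>) \<le> norm \<xi>" by (rule Schwarz_Lemma(1)[OF hol phi0 phib nxi])
        moreover have "of_real s * \<xi> = w" unfolding \<xi>_def using s by simp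
        moreover have nes: "norm (complex_of_real (\<epsilon> * s)) = \<epsilon> * s" using eps s(1) by (simp only: norm_of_real abs_of_pos mult_pos_pos)
        ultimately have "norm (h2 (z,w) - c * w) / (\<epsilon> * s) \<le> norm w / s"
          unfolding \<phi>_def \<xi>_def norm_divide nes using s eps by simp
        then show ?thesis using s eps by (simp add: field_simps)
      qed
    qed
  qed
  have r1: "ball (0,0) \<rho>0 \<subseteq> \<Phi> ` U" using d2 unfolding \<rho>0_def by auto
  have r2: "\<forall>q\<in>ball (0,0) \<rho>0. inv_into U \<Phi> q \<in> U0" using B(7) unfolding B_def G_def by blast
  show ?thesis
    apply (rule exI[of _ \<rho>0], rule exI[of _ c])
    using r0 r1 r2 hol1 hol2 H00 c_real c_nz est
    unfolding B_def h1_def h2_def G_def by blast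
qed

lemma sector_transfer:
  assumes vp: "valid_params r R \<alpha>" and r0: "\<rho>0 > 0"
    and cI: "Im c = 0" and cnz: "c \<noteq> 0"
    and h1c: "isCont h1 (0,0)" "h1 (0,0) = 0"
    and est: "\<forall>\<epsilon>>0. \<exists>\<delta>>0. \<forall>z w. norm z < \<delta> \<and> norm w < \<delta> \<longrightarrow> norm (h2 (z,w) - c * w) \<le> \<epsilon> * norm w"
  shows "\<exists>m. valid_params m m (\<alpha>/2) \<and> std_sect m m (\<alpha>/2) \<subseteq> ball (0,0) \<rho>0 \<and>
   (\<forall>q\<in>std_sect m m (\<alpha>/2). (h1 q, h2 q) \<in> std_sect r R \<alpha>) \<and>
   (\<forall>q\<in>Dplus m m (\<alpha>/2). (h1 q, h2 q) \<in> (if Re c > 0 then Dplus r R \<alpha> else Dminus r R \<alpha>)) \<and>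
   (\<forall>q\<in>Dminus m m (\<alpha>/2). (h1 q, h2 q) \<in> (if Re c > 0 then Dminus r R \<alpha> else Dplus r R \<alpha>))"
proof -
  have r: "r > 0" and R: "R > 0" and al: "0 < \<alpha>" "\<alpha> < pi / 2" using vp unfolding valid_params_def by auto
  obtain ea where ea: "ea > 0" "\<And>w u. w \<noteq> 0 \<Longrightarrow> \<bar>Arg w\<bar> < \<alpha> / 2 \<Longrightarrow> norm (u - 1) < ea \<Longrightarrow> w * u \<noteq> 0 \<and> \<bar>Arg (w * u)\<bar> < \<alpha>"
    using sector_stable[OF al] by blast
  define cr where "cr = Re c"
  have ccr: "c = of_real cr" unfolding cr_def using cI by (simp add: complex_eq_iff)
  have cr0: "cr \<noteq> 0" using cnz ccr by auto
  have acr: "\<bar>cr\<bar> > 0" using cr0 by simp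
  define \<epsilon> where "\<epsilon> = \<bar>cr\<bar> * min ea 1 / 2"
  have eps: "\<epsilon> > 0" "\<epsilon> < \<bar>cr\<bar> * ea" "\<epsilon> < \<bar>cr\<bar>" unfolding \<epsilon>_def using acr ea(1) by (auto simp: min_def)
  obtain \<delta> where dl: "\<delta> > 0" "\<And>z w. norm z < \<delta> \<Longrightarrow> norm w < \<delta> \<Longrightarrow> norm (h2 (z,w) - c * w) \<le> \<epsilon> * norm w"
    using est eps(1) by blast
  obtain \<delta>1 where d1: "\<delta>1 > 0" "\<And>q. dist q (0,0) < \<delta>1 \<Longrightarrow> dist (h1 q) (h1 (0,0)) < r"
    using h1c(1) r unfolding continuous_at_eps_delta by blast
  define m where "m = min (min \<delta> \<delta>1) (min \<rho>0 (R / (4 * \<bar>cr\<bar>))) / 2"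
  have m: "m > 0" "2 * m \<le> \<delta>" "2 * m \<le> \<delta>1" "2 * m \<le> \<rho>0" "2 * m \<le> R / (4 * \<bar>cr\<bar>)"
  proof -
    have pos: "R / (4 * \<bar>cr\<bar>) > 0" using R acr by simp
    have e2: "2 * m = min (min \<delta> \<delta>1) (min \<rho>0 (R / (4 * \<bar>cr\<bar>)))" unfolding m_def by simp
    show "m > 0" unfolding m_def using dl(1) d1(1) r0 pos by simp
    show "2 * m \<le> \<delta>" "2 * m \<le> \<delta>1" "2 * m \<le> \<rho>0" "2 * m \<le> R / (4 * \<bar>cr\<bar>)" unfolding e2 by auto
  qed
  have key: "norm (h1 (z,w)) < r \<and> (z,w) \<in> ball (0,0) \<rho>0 \<and> norm (h2 (z,w)) < R \<and>
      (w = 0 \<longrightarrow> h2 (z,w) = 0) \<and> (w \<noteq> 0 \<longrightarrow> (\<exists>u. h2 (z,w) = c * w * u \<and> norm (u - 1) < ea))"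
    if zw: "norm z < m" "norm w < m" for z w
  proof (intro conjI impI)
    have nq: "norm (z,w) < 2 * m"
    proof -
      have "norm (z,w) \<le> norm z + norm w" by (rule norm_Pair_le)
      then show ?thesis using zw by simp
    qed
    have "dist (z,w) (0,0) < \<delta>1" using nq m(3) by (simp add: dist_norm zero_prod_def[symmetric])
    then show "norm (h1 (z,w)) < r" using d1(2) h1c(2) by (simp add: dist_norm)
    show "(z,w) \<in> ball (0,0) \<rho>0" unfolding in_ball00 using nq m(4) by simp
    have zd: "norm z < \<delta>" "norm w < \<delta>" using zw m(1,2) by auto
    have e: "norm (h2 (z,w) - c * w) \<le> \<epsilon> * norm w" by (rule dl(2)[OF zd])
    have "norm (h2 (z,w)) \<le> norm (c * w) + \<epsilon> * norm w"
      using e norm_triangle_ineq[of "h2 (z,w) - c * w" "c * w"] by simp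
    also have "\<dots> \<le> 2 * \<bar>cr\<bar> * norm w" using eps(3) by (simp add: ccr norm_mult mult_right_mono)
    also have "\<dots> \<le> 2 * \<bar>cr\<bar> * m" using zw acr by (intro mult_left_mono) auto
    also have "\<dots> \<le> 2 * \<bar>cr\<bar> * (R / (8 * \<bar>cr\<bar>))" using m(5) acr by (intro mult_left_mono) auto
    also have "\<dots> < R" using acr R by (simp add: field_simps)
    finally show "norm (h2 (z,w)) < R" .
    show "h2 (z,w) = 0" if "w = 0" using e that by simp
    assume w0: "w \<noteq> 0"
    define u where "u = h2 (z,w) / (c * w)"
    have cw: "c * w \<noteq> 0" using w0 cnz by simp
    have "h2 (z,w) = c * w * u" unfolding u_def using cw by simp
    moreover have "norm (u - 1) < ea"
    proof -
      have "u - 1 = (h2 (z,w) - c * w) / (c * w)" unfolding u_def using cw by (simp add: field_simps)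
      then have "norm (u - 1) = norm (h2 (z,w) - c * w) / (\<bar>cr\<bar> * norm w)"
        by (simp add: norm_divide norm_mult ccr)
      also have "\<dots> \<le> \<epsilon> * norm w / (\<bar>cr\<bar> * norm w)" using e acr w0 by (intro divide_right_mono) auto
      also have "\<dots> = \<epsilon> / \<bar>cr\<bar>" using w0 by simp
      also have "\<dots> < ea" using eps(2) acr by (simp add: divide_less_eq mult.commute)
      finally show ?thesis .
    qed
    ultimately show "\<exists>u. h2 (z,w) = c * w * u \<and> norm (u - 1) < ea" by blast
  qed
  have plus: "(h1 (z,w), h2 (z,w)) \<in> (if Re c > 0 then Dplus r R \<alpha> else Dminus r R \<alpha>)"
    if z: "norm z < m" and w: "w \<in> Splus m (\<alpha>/2)" for z w
  proof -
    have w': "w \<noteq> 0" "norm w < m" "\<bar>Arg w\<bar> < \<alpha> / 2" using w unfolding Splus_def by auto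
    note k = key[OF z w'(2)]
    obtain u where u: "h2 (z,w) = c * w * u" "norm (u - 1) < ea" using k w'(1) by blast
    have wu: "w * u \<noteq> 0" "\<bar>Arg (w * u)\<bar> < \<alpha>" using ea(2)[OF w'(1,3) u(2)] by auto
    show ?thesis
    proof (cases "Re c > 0")
      case True
      then have cp: "cr > 0" unfolding cr_def .
      have eq: "h2 (z,w) = of_real cr * (w * u)" using u(1) ccr by (simp add: mult_ac)
      then have "h2 (z,w) \<noteq> 0" using wu cp by auto
      moreover have "Arg (h2 (z,w)) = Arg (w * u)" by (simp only: eq Arg_times_of_real[OF cp])
      ultimately have "h2 (z,w) \<noteq> 0" "Arg (h2 (z,w)) = Arg (w * u)" by auto
      then show ?thesis using True k wu unfolding Dplus_def Splus_def by auto
    next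
      case False
      then have cp: "-cr > 0" unfolding cr_def using cr0 cr_def by linarith
      have eq: "- h2 (z,w) = of_real (-cr) * (w * u)" using u(1) ccr by (simp add: mult_ac)
      then have "h2 (z,w) \<noteq> 0" using wu cp by (auto simp del: of_real_minus)
      moreover have "Arg (- h2 (z,w)) = Arg (w * u)" by (simp only: eq Arg_times_of_real[OF cp])
      ultimately have "h2 (z,w) \<noteq> 0" "Arg (- h2 (z,w)) = Arg (w * u)" by auto
      then show ?thesis using False k wu unfolding Dminus_def Sminus_def by auto
    qed
  qed
  have minus: "(h1 (z,w), h2 (z,w)) \<in> (if Re c > 0 then Dminus r R \<alpha> else Dplus r R \<alpha>)"
    if z: "norm z < m" and w: "w \<in> Sminus m (\<alpha>/2)" for z w
  proof -
    have w': "w \<noteq> 0" "norm w < m" "\<bar>Arg (-w)\<bar> < \<alpha> / 2" using w unfolding Sminus_def by auto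
    note k = key[OF z w'(2)]
    obtain u where u: "h2 (z,w) = c * w * u" "norm (u - 1) < ea" using k w'(1) by blast
    have w0: "-w \<noteq> 0" using w'(1) by simp
    have wu: "(-w) * u \<noteq> 0" "\<bar>Arg ((-w) * u)\<bar> < \<alpha>" using ea(2)[OF w0 w'(3) u(2)] by auto
    show ?thesis
    proof (cases "Re c > 0")
      case True
      then have cp: "cr > 0" unfolding cr_def .
      have eq: "- h2 (z,w) = of_real cr * ((-w) * u)" using u(1) ccr by (simp add: mult_ac)
      then have "h2 (z,w) \<noteq> 0" using wu cp by (auto simp del: mult_minus_left)
      moreover have "Arg (- h2 (z,w)) = Arg ((-w) * u)" by (simp only: eq Arg_times_of_real[OF cp])
      ultimately have "h2 (z,w) \<noteq> 0" "Arg (- h2 (z,w)) = Arg ((-w) * u)" by auto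
      then show ?thesis using True k wu unfolding Dminus_def Sminus_def by auto
    next
      case False
      then have cp: "-cr > 0" unfolding cr_def using cr0 cr_def by linarith
      have eq: "h2 (z,w) = of_real (-cr) * ((-w) * u)" using u(1) ccr by (simp add: mult_ac)
      then have "h2 (z,w) \<noteq> 0" using wu cp by (auto simp del: of_real_minus mult_minus_left)
      moreover have "Arg (h2 (z,w)) = Arg ((-w) * u)" by (simp only: eq Arg_times_of_real[OF cp])
      ultimately have "h2 (z,w) \<noteq> 0" "Arg (h2 (z,w)) = Arg ((-w) * u)" by auto
      then show ?thesis using False k wu unfolding Dplus_def Splus_def by auto
    qed
  qed
  show ?thesis
  proof (intro exI[of _ m] conjI ballI subsetI)
    show "valid_params m m (\<alpha> / 2)" unfolding valid_params_def using m(1) al by auto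
  next
    fix q assume q: "q \<in> std_sect m m (\<alpha> / 2)"
    obtain z w where qzw: "q = (z,w)" by force
    have z: "norm z < m" using q unfolding qzw std_sect_def by auto
    have w: "norm w < m" using q m(1) unfolding qzw std_sect_def Splus_def Sminus_def by auto
    show "q \<in> ball (0,0) \<rho>0" using key[OF z w] qzw by simp
  next
    fix q assume q: "q \<in> std_sect m m (\<alpha> / 2)"
    obtain z w where qzw: "q = (z,w)" by force
    have z: "norm z < m" using q unfolding qzw std_sect_def by auto
    have w: "w \<in> Splus m (\<alpha>/2) \<or> w = 0 \<or> w \<in> Sminus m (\<alpha>/2)" using q unfolding qzw std_sect_def by auto
    then show "(h1 q, h2 q) \<in> std_sect r R \<alpha>"
    proof (elim disjE)
      assume wp: "w \<in> Splus m (\<alpha>/2)"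
      have "(h1 (z,w), h2 (z,w)) \<in> (if Re c > 0 then Dplus r R \<alpha> else Dminus r R \<alpha>)" by (rule plus[OF z wp])
      then show ?thesis unfolding qzw by (cases "Re c > 0") (auto simp: std_sect_def Dplus_def Dminus_def)
    next
      assume w0: "w = 0"
      have n0: "norm w < m" using m(1) w0 by simp
      have "norm (h1 (z,w)) < r" "h2 (z,w) = 0" using key[OF z n0] w0 by auto
      then show ?thesis using qzw unfolding std_sect_def by simp
    next
      assume wp: "w \<in> Sminus m (\<alpha>/2)"
      have "(h1 (z,w), h2 (z,w)) \<in> (if Re c > 0 then Dminus r R \<alpha> else Dplus r R \<alpha>)" by (rule minus[OF z wp])
      then show ?thesis unfolding qzw by (cases "Re c > 0") (auto simp: std_sect_def Dplus_def Dminus_def)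
    qed
  next
    fix q assume q: "q \<in> Dplus m m (\<alpha> / 2)"
    obtain z w where qzw: "q = (z,w)" by force
    show "(h1 q, h2 q) \<in> (if Re c > 0 then Dplus r R \<alpha> else Dminus r R \<alpha>)"
      using plus[of z w] q unfolding qzw Dplus_def by auto
  next
    fix q assume q: "q \<in> Dminus m m (\<alpha> / 2)"
    obtain z w where qzw: "q = (z,w)" by force
    show "(h1 q, h2 q) \<in> (if Re c > 0 then Dminus r R \<alpha> else Dplus r R \<alpha>)"
      using minus[of z w] q unfolding qzw Dminus_def by auto
  qed
qed

lemma prepare_charts:
  assumes A0: "admissible M U0 \<Phi>0" and A1: "admissible M U \<Phi>" and R: "defining_fn M Ur \<rho>"
    and NM: "(0,0) \<in> complex_locus M" and vp: "valid_params r R \<alpha>"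
  shows "\<exists>\<rho>0 c m. \<rho>0 > 0 \<and> ball (0,0) \<rho>0 \<subseteq> \<Phi> ` U \<and> (\<forall>q\<in>ball (0,0) \<rho>0. inv_into U \<Phi> q \<in> U0) \<and>
    holo2 (ball (0,0) \<rho>0) (\<lambda>q. fst (\<Phi>0 (inv_into U \<Phi> q))) \<and>
    holo2 (ball (0,0) \<rho>0) (\<lambda>q. snd (\<Phi>0 (inv_into U \<Phi> q))) \<and>
    \<Phi>0 (inv_into U \<Phi> (0,0)) = (0,0) \<and>
    valid_params m m (\<alpha>/2) \<and> std_sect m m (\<alpha>/2) \<subseteq> ball (0,0) \<rho>0 \<and>
   (\<forall>q\<in>std_sect m m (\<alpha>/2). \<Phi>0 (inv_into U \<Phi> q) \<in> std_sect r R \<alpha>) \<and>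
   (\<forall>q\<in>Dplus m m (\<alpha>/2). \<Phi>0 (inv_into U \<Phi> q) \<in> (if Re c > 0 then Dplus r R \<alpha> else Dminus r R \<alpha>)) \<and>
   (\<forall>q\<in>Dminus m m (\<alpha>/2). \<Phi>0 (inv_into U \<Phi> q) \<in> (if Re c > 0 then Dminus r R \<alpha> else Dplus r R \<alpha>))"
proof -
  obtain \<rho>0 c where t: "\<rho>0 > 0" "ball (0,0) \<rho>0 \<subseteq> \<Phi> ` U" "\<forall>q\<in>ball (0,0) \<rho>0. inv_into U \<Phi> q \<in> U0"
    "holo2 (ball (0,0) \<rho>0) (\<lambda>q. fst (\<Phi>0 (inv_into U \<Phi> q)))"
    "holo2 (ball (0,0) \<rho>0) (\<lambda>q. snd (\<Phi>0 (inv_into U \<Phi> q)))"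
    "\<Phi>0 (inv_into U \<Phi> (0,0)) = (0,0)" "Im c = 0" "c \<noteq> 0"
    "\<forall>\<epsilon>>0. \<exists>\<delta>>0. \<forall>z w. norm z < \<delta> \<and> norm w < \<delta> \<longrightarrow>
        norm (snd (\<Phi>0 (inv_into U \<Phi> (z,w))) - c * w) \<le> \<epsilon> * norm w"
    using transition[OF A0 A1 R NM] by blast
  have b0: "(0,0) \<in> ball (0::complex,0::complex) \<rho>0" using t(1) by (simp add: in_ball00)
  have ic: "isCont (\<lambda>q. fst (\<Phi>0 (inv_into U \<Phi> q))) (0,0)" by (rule holo2_isCont[OF t(4) b0])
  have h10: "fst (\<Phi>0 (inv_into U \<Phi> (0,0))) = 0" using t(6) by simp
  obtain m where m: "valid_params m m (\<alpha>/2)" "std_sect m m (\<alpha>/2) \<subseteq> ball (0,0) \<rho>0"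
   "\<forall>q\<in>std_sect m m (\<alpha>/2). (fst (\<Phi>0 (inv_into U \<Phi> q)), snd (\<Phi>0 (inv_into U \<Phi> q))) \<in> std_sect r R \<alpha>"
   "\<forall>q\<in>Dplus m m (\<alpha>/2). (fst (\<Phi>0 (inv_into U \<Phi> q)), snd (\<Phi>0 (inv_into U \<Phi> q))) \<in> (if Re c > 0 then Dplus r R \<alpha> else Dminus r R \<alpha>)"
   "\<forall>q\<in>Dminus m m (\<alpha>/2). (fst (\<Phi>0 (inv_into U \<Phi> q)), snd (\<Phi>0 (inv_into U \<Phi> q))) \<in> (if Re c > 0 then Dminus r R \<alpha> else Dplus r R \<alpha>)"
    using sector_transfer[OF vp t(1) t(7) t(8) ic h10 t(9)] by blast
  show ?thesis
    apply (rule exI[of _ \<rho>0], rule exI[of _ c], rule exI[of _ m])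
    using t(1-6) m by simp
qed

lemma Dplus_sub: "Dplus m m a \<subseteq> std_sect m m a" and Dminus_sub: "Dminus m m a \<subseteq> std_sect m m a"
  unfolding Dplus_def Dminus_def std_sect_def by auto

lemma zero_notin: "(0,0) \<notin> Dplus r R a" "(0,0) \<notin> Dminus r R a"
  unfolding Dplus_def Dminus_def Splus_def Sminus_def by auto

theorem proposition3p3:
  fixes M :: "(complex \<times> complex) set"
  assumes "real_analytic_hypersurface M"
    and "levi_nonflat M"
    and "nonminimal_at0 M"
  shows "(\<forall>D U \<Phi>. tangential_sectorial M D \<and> admissible M U \<Phi> \<longrightarrow>
            (\<exists>r R \<alpha>. valid_params r R \<alpha> \<and> std_sect r R \<alpha> \<subseteq> \<Phi> ` U \<and>
                      {p \<in> U. \<Phi> p \<in> std_sect r R \<alpha>} \<subseteq> D))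
       \<and> (\<forall>f V D U \<Phi> r R \<alpha>. CR_smooth M V f \<and> std_in M U \<Phi> r R \<alpha> D \<and> sect_ext f M U \<Phi> r R \<alpha> \<longrightarrow>
            (\<forall>U' \<Psi>. admissible M U' \<Psi> \<longrightarrow>
               (\<exists>r' R' \<alpha>' D'. std_in M U' \<Psi> r' R' \<alpha>' D' \<and> sect_ext f M U' \<Psi> r' R' \<alpha>')))"
proof -
  obtain Ur \<rho> where R: "defining_fn M Ur \<rho>" using assms(1) unfolding real_analytic_hypersurface_def by blast
  have NM: "(0,0) \<in> complex_locus M" using assms(3) unfolding nonminimal_at0_def .
  have part1: "\<exists>r R \<alpha>. valid_params r R \<alpha> \<and> std_sect r R \<alpha> \<subseteq> \<Phi> ` U \<and> {p \<in> U. \<Phi> p \<in> std_sect r R \<alpha>} \<subseteq> D"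
    if TS: "tangential_sectorial M D" and A1: "admissible M U \<Phi>" for D U \<Phi>
  proof -
    obtain U0 \<Phi>0 r R \<alpha> where S: "std_in M U0 \<Phi>0 r R \<alpha> D" using TS unfolding tangential_sectorial_def by blast
    have A0: "admissible M U0 \<Phi>0" and vp: "valid_params r R \<alpha>" and Deq: "D = {p \<in> U0. \<Phi>0 p \<in> std_sect r R \<alpha>}"
      using S unfolding std_in_def by auto
    obtain \<rho>0 c m where s: "ball (0,0) \<rho>0 \<subseteq> \<Phi> ` U" "\<forall>q\<in>ball (0,0) \<rho>0. inv_into U \<Phi> q \<in> U0"
      "valid_params m m (\<alpha>/2)" "std_sect m m (\<alpha>/2) \<subseteq> ball (0,0) \<rho>0"
      "\<forall>q\<in>std_sect m m (\<alpha>/2). \<Phi>0 (inv_into U \<Phi> q) \<in> std_sect r R \<alpha>"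
      using prepare_charts[OF A0 A1 R NM vp] by blast
    have C: "coord_chart U \<Phi>" using A1 unfolding admissible_def by blast
    note cb = chart_basic[OF C]
    show ?thesis
    proof (rule exI[of _ m], rule exI[of _ m], rule exI[of _ "\<alpha>/2"], intro conjI s(3))
      show "std_sect m m (\<alpha> / 2) \<subseteq> \<Phi> ` U" using s(1,4) by blast
      show "{p \<in> U. \<Phi> p \<in> std_sect m m (\<alpha> / 2)} \<subseteq> D"
      proof
      fix p assume p: "p \<in> {p \<in> U. \<Phi> p \<in> std_sect m m (\<alpha> / 2)}"
      then have pU: "p \<in> U" and ps: "\<Phi> p \<in> std_sect m m (\<alpha> / 2)" by auto
      have inv: "inv_into U \<Phi> (\<Phi> p) = p" by (rule cb(9)[OF pU])
      have "p \<in> U0" using s(2) s(4) ps inv by force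
      moreover have "\<Phi>0 p \<in> std_sect r R \<alpha>" using s(5) ps inv by force
      ultimately show "p \<in> D" unfolding Deq by simp
      qed
    qed
  qed
  have part2: "\<exists>r' R' \<alpha>' D'. std_in M U' \<Psi> r' R' \<alpha>' D' \<and> sect_ext f M U' \<Psi> r' R' \<alpha>'"
    if S: "std_in M U \<Phi> r R \<alpha> D" and SE: "sect_ext f M U \<Phi> r R \<alpha>" and A1: "admissible M U' \<Psi>"
    for f D U \<Phi> r R \<alpha> U' \<Psi>
  proof -
    have A0: "admissible M U \<Phi>" and vp: "valid_params r R \<alpha>" using S unfolding std_in_def by auto
    obtain \<rho>0 c m where s: "\<rho>0 > 0" "ball (0,0) \<rho>0 \<subseteq> \<Psi> ` U'" "\<forall>q\<in>ball (0,0) \<rho>0. inv_into U' \<Psi> q \<in> U"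
      "holo2 (ball (0,0) \<rho>0) (\<lambda>q. fst (\<Phi> (inv_into U' \<Psi> q)))"
      "holo2 (ball (0,0) \<rho>0) (\<lambda>q. snd (\<Phi> (inv_into U' \<Psi> q)))"
      "\<Phi> (inv_into U' \<Psi> (0,0)) = (0,0)"
      "valid_params m m (\<alpha>/2)" "std_sect m m (\<alpha>/2) \<subseteq> ball (0,0) \<rho>0"
      "\<forall>q\<in>Dplus m m (\<alpha>/2). \<Phi> (inv_into U' \<Psi> q) \<in> (if Re c > 0 then Dplus r R \<alpha> else Dminus r R \<alpha>)"
      "\<forall>q\<in>Dminus m m (\<alpha>/2). \<Phi> (inv_into U' \<Psi> q) \<in> (if Re c > 0 then Dminus r R \<alpha> else Dplus r R \<alpha>)"
      using prepare_charts[OF A0 A1 R NM vp] by blast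
    define h1 where "h1 q = fst (\<Phi> (inv_into U' \<Psi> q))" for q
    define h2 where "h2 q = snd (\<Phi> (inv_into U' \<Psi> q))" for q
    define H where "H q = (h1 q, h2 q)" for q
    have Heq: "H q = \<Phi> (inv_into U' \<Psi> q)" for q unfolding H_def h1_def h2_def by simp
    have hol1: "holo2 (ball (0,0) \<rho>0) h1" using s(4) unfolding h1_def .
    have hol2: "holo2 (ball (0,0) \<rho>0) h2" using s(5) unfolding h2_def .
    have z1: "h1 (0,0) = 0" and z2: "h2 (0,0) = 0" using s(6) unfolding h1_def h2_def by auto
    obtain gp gm a where g: "holo2 (Dplus r R \<alpha>) gp" "holo2 (Dminus r R \<alpha>) gm"
      "\<And>p. p \<in> U \<inter> M \<Longrightarrow> \<Phi> p \<in> Dplus r R \<alpha> \<Longrightarrow> gp (\<Phi> p) = f p"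
      "\<And>p. p \<in> U \<inter> M \<Longrightarrow> \<Phi> p \<in> Dminus r R \<alpha> \<Longrightarrow> gm (\<Phi> p) = f p"
      "asymp_rep gp a (Dplus r R \<alpha>)" "asymp_rep gm a (Dminus r R \<alpha>)"
      using SE unfolding sect_ext_def by blast
    have sub: "cball 0 (\<rho>0/3) \<times> cball 0 (\<rho>0/3) \<subseteq> ball (0::complex,0::complex) \<rho>0"
    proof
      fix p :: "complex \<times> complex" assume "p \<in> cball 0 (\<rho>0/3) \<times> cball 0 (\<rho>0/3)"
      then have "norm (fst p) \<le> \<rho>0/3" "norm (snd p) \<le> \<rho>0/3" by auto
      moreover have "norm p \<le> norm (fst p) + norm (snd p)" by (metis norm_Pair_le prod.collapse)
      ultimately show "p \<in> ball (0,0) \<rho>0" unfolding in_ball00 using s(1) by linarith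
    qed
    obtain a' where E: "\<And>N. \<exists>C \<delta>. \<delta> > 0 \<and> (\<forall>q. norm q < \<delta> \<longrightarrow> norm (PP N a (h1 q, h2 q) - PP N a' q) \<le> C * norm q ^ Suc N)"
      using expand_compose[OF hol1 hol2 _ sub z1 z2, of a] s(1) by auto
    have b0: "(0,0) \<in> ball (0::complex,0::complex) \<rho>0" using s(1) by (simp add: in_ball00)
    obtain L1 where L1: "(h1 has_derivative L1) (at (0,0))" using holo2_D[OF hol1 b0] by blast
    obtain L2 where L2: "(h2 has_derivative L2) (at (0,0))" using holo2_D[OF hol2 b0] by blast
    have "(H has_derivative (\<lambda>v. (L1 v, L2 v))) (at 0)"
      unfolding H_def zero_prod_def by (rule has_derivative_Pair[OF L1 L2])
    moreover have "H 0 = 0" unfolding H_def zero_prod_def using z1 z2 by simp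
    ultimately obtain K dK where K: "K > 0" "dK > 0" "\<And>q. norm q < dK \<Longrightarrow> norm (H q) \<le> K * norm q"
      using lin_bound by blast
    have EH: "\<And>N. \<exists>C \<delta>. \<delta> > 0 \<and> (\<forall>q. norm q < \<delta> \<longrightarrow> norm (PP N a (H q) - PP N a' q) \<le> C * norm q ^ Suc N)"
      unfolding H_def by (rule E)
    define D' where "D' = {p \<in> U'. \<Psi> p \<in> std_sect m m (\<alpha>/2)}"
    have stdin: "std_in M U' \<Psi> m m (\<alpha>/2) D'"
      unfolding std_in_def D'_def using A1 s(7) s(2) s(8) by blast
    have C': "coord_chart U' \<Psi>" using A1 unfolding admissible_def by blast
    note cb' = chart_basic[OF C']
    have DpB: "Dplus m m (\<alpha>/2) \<subseteq> ball (0,0) \<rho>0" using Dplus_sub s(8) by blast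
    have DmB: "Dminus m m (\<alpha>/2) \<subseteq> ball (0,0) \<rho>0" using Dminus_sub s(8) by blast
    have backw: "inv_into U' \<Psi> (\<Psi> p) = p" "p \<in> U" "\<Phi> p = H (\<Psi> p)"
      if "p \<in> U'" "\<Psi> p \<in> ball (0,0) \<rho>0" for p
    proof -
      show i: "inv_into U' \<Psi> (\<Psi> p) = p" by (rule cb'(9)[OF that(1)])
      show "p \<in> U" using s(3) that(2) i by force
      show "\<Phi> p = H (\<Psi> p)" unfolding Heq i ..
    qed
    have ext: "sect_ext f M U' \<Psi> m m (\<alpha>/2)"
    proof (cases "Re c > 0")
      case True
      have mp: "\<And>q. q \<in> Dplus m m (\<alpha>/2) \<Longrightarrow> (h1 q, h2 q) \<in> Dplus r R \<alpha>"
        using s(9) True Heq unfolding H_def by auto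
      have mm: "\<And>q. q \<in> Dminus m m (\<alpha>/2) \<Longrightarrow> (h1 q, h2 q) \<in> Dminus r R \<alpha>"
        using s(10) True Heq unfolding H_def by auto
      show ?thesis
        unfolding sect_ext_def
      proof (rule exI[of _ "\<lambda>q. gp (h1 q, h2 q)"], rule exI[of _ "\<lambda>q. gm (h1 q, h2 q)"], rule exI[of _ a'], intro conjI ballI impI)
        show "holo2 (Dplus m m (\<alpha> / 2)) (\<lambda>q. gp (h1 q, h2 q))"
          by (rule holo2_compose[OF g(1) holo2_subset[OF hol1 DpB] holo2_subset[OF hol2 DpB] mp])
        show "holo2 (Dminus m m (\<alpha> / 2)) (\<lambda>q. gm (h1 q, h2 q))"
          by (rule holo2_compose[OF g(2) holo2_subset[OF hol1 DmB] holo2_subset[OF hol2 DmB] mm])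
        fix p assume p: "p \<in> U' \<inter> M" and pd: "\<Psi> p \<in> Dplus m m (\<alpha> / 2)"
        have pb: "\<Psi> p \<in> ball (0,0) \<rho>0" using pd DpB by blast
        note bk = backw[OF _ pb] 
        have "\<Phi> p \<in> Dplus r R \<alpha>" using mp[OF pd] bk p unfolding H_def by auto
        then show "gp (h1 (\<Psi> p), h2 (\<Psi> p)) = f p" using g(3)[of p] bk p unfolding H_def by auto
      next
        fix p assume p: "p \<in> U' \<inter> M" and pd: "\<Psi> p \<in> Dminus m m (\<alpha> / 2)"
        have pb: "\<Psi> p \<in> ball (0,0) \<rho>0" using pd DmB by blast
        note bk = backw[OF _ pb]
        have "\<Phi> p \<in> Dminus r R \<alpha>" using mm[OF pd] bk p unfolding H_def by auto
        then show "gm (h1 (\<Psi> p), h2 (\<Psi> p)) = f p" using g(4)[of p] bk p unfolding H_def by auto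
      next
        show "asymp_rep (\<lambda>q. gp (h1 q, h2 q)) a' (Dplus m m (\<alpha> / 2))"
          using asymp_compose[OF g(5) zero_notin(1) K(2) _ K(1) K(3) EH] mp unfolding H_def by blast
        show "asymp_rep (\<lambda>q. gm (h1 q, h2 q)) a' (Dminus m m (\<alpha> / 2))"
          using asymp_compose[OF g(6) zero_notin(2) K(2) _ K(1) K(3) EH] mm unfolding H_def by blast
      qed
    next
      case False
      have mp: "\<And>q. q \<in> Dplus m m (\<alpha>/2) \<Longrightarrow> (h1 q, h2 q) \<in> Dminus r R \<alpha>"
        using s(9) False Heq unfolding H_def by auto
      have mm: "\<And>q. q \<in> Dminus m m (\<alpha>/2) \<Longrightarrow> (h1 q, h2 q) \<in> Dplus r R \<alpha>"
        using s(10) False Heq unfolding H_def by auto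
      show ?thesis
        unfolding sect_ext_def
      proof (rule exI[of _ "\<lambda>q. gm (h1 q, h2 q)"], rule exI[of _ "\<lambda>q. gp (h1 q, h2 q)"], rule exI[of _ a'], intro conjI ballI impI)
        show "holo2 (Dplus m m (\<alpha> / 2)) (\<lambda>q. gm (h1 q, h2 q))"
          by (rule holo2_compose[OF g(2) holo2_subset[OF hol1 DpB] holo2_subset[OF hol2 DpB] mp])
        show "holo2 (Dminus m m (\<alpha> / 2)) (\<lambda>q. gp (h1 q, h2 q))"
          by (rule holo2_compose[OF g(1) holo2_subset[OF hol1 DmB] holo2_subset[OF hol2 DmB] mm])
        fix p assume p: "p \<in> U' \<inter> M" and pd: "\<Psi> p \<in> Dplus m m (\<alpha> / 2)"
        have pb: "\<Psi> p \<in> ball (0,0) \<rho>0" using pd DpB by blast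
        note bk = backw[OF _ pb]
        have "\<Phi> p \<in> Dminus r R \<alpha>" using mp[OF pd] bk p unfolding H_def by auto
        then show "gm (h1 (\<Psi> p), h2 (\<Psi> p)) = f p" using g(4)[of p] bk p unfolding H_def by auto
      next
        fix p assume p: "p \<in> U' \<inter> M" and pd: "\<Psi> p \<in> Dminus m m (\<alpha> / 2)"
        have pb: "\<Psi> p \<in> ball (0,0) \<rho>0" using pd DmB by blast
        note bk = backw[OF _ pb]
        have "\<Phi> p \<in> Dplus r R \<alpha>" using mm[OF pd] bk p unfolding H_def by auto
        then show "gp (h1 (\<Psi> p), h2 (\<Psi> p)) = f p" using g(3)[of p] bk p unfolding H_def by auto
      next
        show "asymp_rep (\<lambda>q. gm (h1 q, h2 q)) a' (Dplus m m (\<alpha> / 2))"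
          using asymp_compose[OF g(6) zero_notin(2) K(2) _ K(1) K(3) EH] mp unfolding H_def by blast
        show "asymp_rep (\<lambda>q. gp (h1 q, h2 q)) a' (Dminus m m (\<alpha> / 2))"
          using asymp_compose[OF g(5) zero_notin(1) K(2) _ K(1) K(3) EH] mm unfolding H_def by blast
      qed
    qed
    show ?thesis using stdin ext by blast
  qed
  show ?thesis
  proof (intro conjI)
    show "\<forall>D U \<Phi>. tangential_sectorial M D \<and> admissible M U \<Phi> \<longrightarrow>
            (\<exists>r R \<alpha>. valid_params r R \<alpha> \<and> std_sect r R \<alpha> \<subseteq> \<Phi> ` U \<and>
                      {p \<in> U. \<Phi> p \<in> std_sect r R \<alpha>} \<subseteq> D)"
    proof (intro allI impI)
      fix D U \<Phi> assume h: "tangential_sectorial M D \<and> admissible M U \<Phi>"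
      show "\<exists>r R \<alpha>. valid_params r R \<alpha> \<and> std_sect r R \<alpha> \<subseteq> \<Phi> ` U \<and> {p \<in> U. \<Phi> p \<in> std_sect r R \<alpha>} \<subseteq> D"
        by (rule part1[OF conjunct1[OF h] conjunct2[OF h]])
    qed
    show "\<forall>f V D U \<Phi> r R \<alpha>. CR_smooth M V f \<and> std_in M U \<Phi> r R \<alpha> D \<and> sect_ext f M U \<Phi> r R \<alpha> \<longrightarrow>
            (\<forall>U' \<Psi>. admissible M U' \<Psi> \<longrightarrow>
               (\<exists>r' R' \<alpha>' D'. std_in M U' \<Psi> r' R' \<alpha>' D' \<and> sect_ext f M U' \<Psi> r' R' \<alpha>'))"
    proof (intro allI impI)
      fix f V D U \<Phi> r R \<alpha> U' \<Psi>
      assume h: "CR_smooth M V f \<and> std_in M U \<Phi> r R \<alpha> D \<and> sect_ext f M U \<Phi> r R \<alpha>"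
        and a: "admissible M U' \<Psi>"
      show "\<exists>r' R' \<alpha>' D'. std_in M U' \<Psi> r' R' \<alpha>' D' \<and> sect_ext f M U' \<Psi> r' R' \<alpha>'"
        by (rule part2[OF conjunct1[OF conjunct2[OF h]] conjunct2[OF conjunct2[OF h]] a])
    qed
  qed
qed

end
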